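(* Let $0<q<1$ and $\nu\in\mathbb{R}$. Define, for $z\in\mathbb{C}\setminus(-\infty,0]$ (principal branches of powers), $$I_\nu^{(3)}((1-q^2)z;q^2)=\sum_{k=0}^\infty\frac{q^{k(\nu+k)}(1-q^2)^k(z/2)^{\nu+2k}}{(q^2;q^2)_k\,\Gamma_{q^2}(\nu+k+1)},$$ and, for non-integer $\nu$, $$K_\nu^{(3)}((1-q^2)z;q^2)=\tfrac12 q^{-\nu^2+\nu}\Gamma_{q^2}(\nu)\Gamma_{q^2}(1-\nu)\left[I_{-\nu}^{(3)}((1-q^2)z;q^2)-I_\nu^{(3)}((1-q^2)z;q^2)\right],$$ extended to integer $\nu=n$ by taking the limit $\nu\to n$. Then $$\frac{2}{(1+q)z}\,\partial_q\!\left[z^\nu K_\nu^{(3)}((1-q^2)z;q^2)\right]=-q^{-\frac{\nu-1}{2}}z^{\nu-1}K_{\nu-1}^{(3)}((1-q^2)q^{1/2}z;q^2),$$ $$\frac{2}{(1+q)z}\,\partial_q\!\left[z^{-\nu} K_\nu^{(3)}((1-q^2)z;q^2)\right]=-q^{\frac{\nu+1}{2}}z^{-\nu-1}K_{\nu+1}^{(3)}((1-q^2)q^{1/2}z;q^2).$$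
   Context: $(a;q)_k=\prod_{j=0}^{k-1}(1-aq^j)$, $(a;q)_\infty=\prod_{j\ge0}(1-aq^j)$. The $q$-Gamma function is $\Gamma_{q}(x)=\frac{(q;q)_\infty}{(q^x;q)_\infty}(1-q)^{1-x}$, used here with base $q^2$. The $q$-derivative is $\partial_q f(z)=\frac{f(z)-f(qz)}{(1-q)z}$, applied to the function of $z$ in brackets. *)

theory Defs
  imports "HOL-Analysis.Analysis"
begin

definition qpoch :: "real \<Rightarrow> real \<Rightarrow> nat \<Rightarrow> real" where
  "qpoch a q k = (\<Prod>j<k. 1 - a * q ^ j)"

definition qpoch_inf :: "real \<Rightarrow> real \<Rightarrow> real" where
  "qpoch_inf a q = (\<Prod>j. 1 - a * q ^ j)"

text \<open>q-Gamma function. At its poles the denominator vanishes and, by the HOL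
  convention x / 0 = 0, the reciprocal 1 / qGamma is 0 there, matching the
  usual convention 1/Gamma_q = 0 at the poles.\<close>
definition qGamma :: "real \<Rightarrow> real \<Rightarrow> real" where
  "qGamma q x = qpoch_inf q q / qpoch_inf (q powr x) q * (1 - q) powr (1 - x)"

definition qderiv :: "real \<Rightarrow> (complex \<Rightarrow> complex) \<Rightarrow> complex \<Rightarrow> complex" where
  "qderiv q f z = (f z - f (complex_of_real q * z)) / ((1 - complex_of_real q) * z)"

text \<open>I3 q nu z stands for I_nu^(3)((1-q^2) z; q^2), principal branch powers.\<close>
definition I3 :: "real \<Rightarrow> real \<Rightarrow> complex \<Rightarrow> complex" where
  "I3 q \<nu> z = (\<Sum>k. complex_of_real
      (q powr (real k * (\<nu> + real k)) * (1 - q\<^sup>2) ^ k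
        / (qpoch (q\<^sup>2) (q\<^sup>2) k * qGamma (q\<^sup>2) (\<nu> + real k + 1)))
      * (z / 2) powr complex_of_real (\<nu> + 2 * real k))"

definition K3_formula :: "real \<Rightarrow> real \<Rightarrow> complex \<Rightarrow> complex" where
  "K3_formula q \<nu> z = complex_of_real
      (1/2 * q powr (- (\<nu>\<^sup>2) + \<nu>) * qGamma (q\<^sup>2) \<nu> * qGamma (q\<^sup>2) (1 - \<nu>))
      * (I3 q (- \<nu>) z - I3 q \<nu> z)"

text \<open>K3 q nu z stands for K_nu^(3)((1-q^2) z; q^2); at integer nu it is the limit.\<close>
definition K3 :: "real \<Rightarrow> real \<Rightarrow> complex \<Rightarrow> complex" where
  "K3 q \<nu> z = (if \<nu> \<notin> \<int> then K3_formula q \<nu> z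
               else Lim (at \<nu>) (\<lambda>\<mu>. K3_formula q \<mu> z))"

end

theory Submission
  imports Defs "HOL-Complex_Analysis.Complex_Analysis"
begin


lemma qp_conv:
  fixes x c :: "'a::{real_normed_field,banach}"
  assumes "norm c < 1"
  shows "convergent_prod (\<lambda>j. 1 - x * c^j)"
proof -
  have "summable (\<lambda>j. norm x * norm c ^ j)"
    using assms by (intro summable_mult summable_geometric) auto
  hence "summable (\<lambda>j. norm ((1 - x * c^j) - 1))"
    by (simp add: norm_mult norm_power)
  thus ?thesis
    by (intro abs_convergent_prod_imp_convergent_prod summable_imp_abs_convergent_prod)
qed

lemma qpinf_split:
  fixes x a :: real
  assumes "0 < a" "a < 1"
  shows "qpoch_inf x a = (\<Prod>i<m. 1 - x * a^i) * qpoch_inf (x * a^m) a"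
proof -
  have c: "convergent_prod (\<lambda>j. 1 - x * a^j)" using assms by (intro qp_conv) auto
  have "(\<lambda>j. 1 - x * a^j) has_prod ((\<Prod>k<m. 1 - x * a^k) * (\<Prod>k. 1 - x * a^(k+m)))"
    by (rule has_prod_ignore_initial_segment'[OF c])
  moreover have "(\<lambda>k. 1 - x * a^(k+m)) = (\<lambda>k. 1 - (x * a^m) * a^k)"
    by (simp add: power_add mult_ac)
  ultimately show ?thesis unfolding qpoch_inf_def
    using has_prod_unique by (metis)
qed

lemma qpinf_step:
  fixes x a :: real
  assumes "0 < a" "a < 1"
  shows "qpoch_inf x a = (1 - x) * qpoch_inf (x * a) a"
  using qpinf_split[OF assms, of x 1] by simp

lemma qpinf_nonzero:
  fixes x a :: real
  assumes "0 < a" "a < 1" "\<And>j. x * a^j \<noteq> 1"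
  shows "qpoch_inf x a \<noteq> 0"
  unfolding qpoch_inf_def
  by (rule prodinf_nonzero) (use assms qp_conv[of a x] in auto)

lemma qpinf_zero:
  fixes x a :: real
  assumes "0 < a" "a < 1" "x * a^j = 1"
  shows "qpoch_inf x a = 0"
proof -
  have "qpoch_inf x a = (\<Prod>i<Suc j. 1 - x * a^i) * qpoch_inf (x * a^Suc j) a"
    by (rule qpinf_split[OF assms(1,2)])
  thus ?thesis using assms(3) by simp
qed

lemma qpoch_Suc: "qpoch a q (Suc k) = qpoch a q k * (1 - a * q^k)"
  unfolding qpoch_def by simp

lemma Pa_split:
  fixes a :: real
  assumes "0 < a" "a < 1"
  shows "qpoch_inf a a = qpoch a a k * qpoch_inf (a powr (real k + 1)) a"
proof -
  have "qpoch_inf a a = (\<Prod>i<k. 1 - a * a^i) * qpoch_inf (a * a^k) a"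
    by (rule qpinf_split[OF assms])
  moreover have "a * a^k = a powr (real k + 1)"
    using assms by (simp add: powr_add powr_realpow)
  ultimately show ?thesis unfolding qpoch_def by simp
qed

lemma Pa_nonzero:
  fixes a :: real
  assumes "0 < a" "a < 1"
  shows "qpoch_inf a a \<noteq> 0"
proof (rule qpinf_nonzero[OF assms])
  fix j
  have "a^j \<le> 1" using assms by (simp add: power_le_one)
  hence "a * a^j < 1" using assms mult_left_le[of "a^j" a] by linarith
  thus "a * a ^ j \<noteq> 1" by simp
qed

lemma rGamma_eq:
  fixes a y :: real
  assumes "0 < a" "a < 1"
  shows "inverse (qGamma a y) = qpoch_inf (a powr y) a * (1 - a) powr (y - 1) / qpoch_inf a a"
proof -
  have "inverse ((1 - a) powr (1 - y)) = (1 - a) powr (y - 1)"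
    by (metis minus_diff_eq powr_minus)
  thus ?thesis unfolding qGamma_def
    by (simp add: divide_inverse inverse_mult_distrib mult_ac)
qed

lemma qGamma_nat:
  fixes a :: real
  assumes "0 < a" "a < 1"
  shows "qGamma a (real k + 1) = qpoch a a k * (1 - a) powr (- real k)"
  unfolding qGamma_def using Pa_split[OF assms, of k] Pa_nonzero[OF assms]
  by simp

lemma qGamma_refl_prod:
  fixes a x :: real
  assumes "0 < a" "a < 1"
  shows "qGamma a x * qGamma a (1 - x) =
     (qpoch_inf a a)^2 * (1 - a) / (qpoch_inf (a powr x) a * qpoch_inf (a powr (1 - x)) a)"
proof -
  have "(1 - a) powr (1 - x) * (1 - a) powr (1 - (1 - x)) = 1 - a"
    using assms by (simp flip: powr_add)
  thus ?thesis unfolding qGamma_def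
    by (simp add: divide_inverse inverse_mult_distrib power2_eq_square mult_ac)
qed

lemma qpinf_powr_step:
  fixes a y :: real
  assumes "0 < a" "a < 1"
  shows "qpoch_inf (a powr y) a = (1 - a powr y) * qpoch_inf (a powr (y + 1)) a"
  using qpinf_step[OF assms, of "a powr y"] assms by (simp add: powr_add)

lemma qpinf_powr_nonzero:
  fixes a y :: real
  assumes "0 < a" "a < 1" "y \<notin> \<int>"
  shows "qpoch_inf (a powr y) a \<noteq> 0"
proof (rule qpinf_nonzero[OF assms(1,2)])
  fix j :: nat
  have "a powr y * a ^ j = a powr (y + real j)"
    using assms by (simp add: powr_add powr_realpow)
  moreover have "y + real j \<noteq> 0"
  proof
    assume "y + real j = 0"
    hence "y = - real j" by simp
    thus False using assms(3) by (metis Ints_minus Ints_of_nat)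
  qed
  ultimately show "a powr y * a ^ j \<noteq> 1"
    using assms by (metis powr_eq_one_iff_gen less_irrefl)
qed


definition Ec :: "real \<Rightarrow> complex \<Rightarrow> complex" where
  "Ec a x = (\<Prod>j. 1 - x * complex_of_real a ^ j)"

lemma Ec_of_real:
  fixes a t :: real
  assumes "0 < a" "a < 1"
  shows "Ec a (complex_of_real t) = complex_of_real (qpoch_inf t a)"
proof -
  have c: "convergent_prod (\<lambda>j. 1 - t * a^j)" using assms by (intro qp_conv) auto
  hence "(\<lambda>j. 1 - t * a^j) has_prod qpoch_inf t a"
    unfolding qpoch_inf_def by (rule convergent_prod_has_prod)
  hence "(\<lambda>j. complex_of_real (1 - t * a^j)) has_prod complex_of_real (qpoch_inf t a)"
    by (subst has_prod_of_real_iff)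
  hence "(\<lambda>j. 1 - complex_of_real t * complex_of_real a ^ j) has_prod complex_of_real (qpoch_inf t a)"
    by simp
  thus ?thesis unfolding Ec_def by (metis has_prod_unique)
qed

lemma Ec_LIMSEQ:
  fixes a :: real
  assumes "0 < a" "a < 1"
  shows "(\<lambda>N. \<Prod>j<N. 1 - x * complex_of_real a ^ j) \<longlonglongrightarrow> Ec a x"
proof -
  have "convergent_prod (\<lambda>j. 1 - x * complex_of_real a ^ j)"
    using assms by (intro qp_conv) auto
  hence "(\<lambda>N. \<Prod>j\<le>N. 1 - x * complex_of_real a ^ j) \<longlonglongrightarrow> Ec a x"
    unfolding Ec_def by (rule convergent_prod_LIMSEQ)
  thus ?thesis by (subst LIMSEQ_lessThan_iff_atMost)
qed

lemma Ec_ulim: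
  fixes a :: real
  assumes "0 < a" "a < 1"
  shows "uniform_limit (cball 0 R) (\<lambda>N x. \<Prod>j<N. 1 - x * complex_of_real a ^ j) (Ec a) sequentially"
proof -
  have "uniformly_convergent_on (cball 0 R) (\<lambda>N x. \<Sum>n<N. norm ((1 - x * complex_of_real a ^ n) - 1))"
  proof (rule Weierstrass_m_test'[where M = "\<lambda>n. R * a^n"])
    fix n and x :: complex assume "x \<in> cball 0 R"
    hence "norm x \<le> R" by simp
    thus "norm (norm ((1 - x * complex_of_real a ^ n) - 1)) \<le> R * a^n"
      using assms by (simp add: norm_mult norm_power mult_right_mono)
  next
    show "summable (\<lambda>n. R * a^n)" using assms by (intro summable_mult summable_geometric) auto
  qed
  hence "uniformly_convergent_on (cball 0 R) (\<lambda>N x. \<Prod>j<N. 1 - x * complex_of_real a ^ j)"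
    by (intro uniformly_convergent_on_prod') (auto intro!: continuous_intros)
  hence "uniform_limit (cball 0 R) (\<lambda>N x. \<Prod>j<N. 1 - x * complex_of_real a ^ j)
           (\<lambda>x. lim (\<lambda>N. \<Prod>j<N. 1 - x * complex_of_real a ^ j)) sequentially"
    by (simp add: uniformly_convergent_uniform_limit_iff)
  moreover have "lim (\<lambda>N. \<Prod>j<N. 1 - x * complex_of_real a ^ j) = Ec a x" for x
    using Ec_LIMSEQ[OF assms] by (rule limI)
  ultimately show ?thesis by simp
qed

lemma Ec_holo:
  fixes a :: real
  assumes "0 < a" "a < 1"
  shows "Ec a holomorphic_on UNIV"
proof -
  have "Ec a field_differentiable at x" for x
  proof -
    have "continuous_on (cball 0 (norm x + 1)) (Ec a) \<and> Ec a holomorphic_on ball 0 (norm x + 1)"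
      by (rule holomorphic_uniform_limit[OF _ Ec_ulim[OF assms]])
         (auto intro!: always_eventually holomorphic_intros continuous_intros)
    thus ?thesis
      by (intro holomorphic_on_imp_differentiable_at[of _ "ball 0 (norm x + 1)"]) auto
  qed
  thus ?thesis by (simp add: holomorphic_on_def field_differentiable_at_within)
qed

lemma Ec_holo' [holomorphic_intros]:
  fixes a :: real
  assumes "0 < a" "a < 1" "f holomorphic_on S"
  shows "(\<lambda>s. Ec a (f s)) holomorphic_on S"
  using holomorphic_on_compose[OF assms(3) holomorphic_on_subset[OF Ec_holo[OF assms(1,2)]]]
  by (simp add: o_def)

lemma qpinf_isCont:
  fixes a :: real
  assumes "0 < a" "a < 1"
  shows "isCont (\<lambda>t. qpoch_inf t a) t"
proof -
  have "continuous_on UNIV (Ec a)"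
    using Ec_holo[OF assms] by (rule holomorphic_on_imp_continuous_on)
  hence c: "isCont (Ec a) (complex_of_real t)" by (simp add: continuous_on_eq_continuous_at)
  have "isCont (\<lambda>t. Ec a (complex_of_real t)) t"
    by (rule isCont_o2[where f=complex_of_real and g="Ec a", OF _ c]) (intro continuous_intros)
  hence "isCont (\<lambda>t. Re (Ec a (complex_of_real t))) t"
    by (rule isCont_Re)
  thus ?thesis using Ec_of_real[OF assms] by simp
qed


definition cf :: "real \<Rightarrow> real \<Rightarrow> nat \<Rightarrow> real" where
  "cf q \<mu> k = q powr (real k * (\<mu> + real k)) * (1 - q\<^sup>2) ^ k
        / (qpoch (q\<^sup>2) (q\<^sup>2) k * qGamma (q\<^sup>2) (\<mu> + real k + 1))"

lemma I3_cf: "I3 q \<mu> z = (\<Sum>k. complex_of_real (cf q \<mu> k) * (z / 2) powr complex_of_real (\<mu> + 2 * real k))"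
  unfolding I3_def cf_def ..

lemma cf_alt:
  assumes "0 < q" "q < 1"
  shows "cf q \<mu> k = q powr (real k * (\<mu> + real k)) * (1 - q\<^sup>2) ^ k / qpoch (q\<^sup>2) (q\<^sup>2) k
      * (qpoch_inf ((q\<^sup>2) powr (\<mu> + real k + 1)) (q\<^sup>2) * (1 - q\<^sup>2) powr (\<mu> + real k)
         / qpoch_inf (q\<^sup>2) (q\<^sup>2))"
proof -
  have a: "0 < q\<^sup>2" "q\<^sup>2 < 1" using assms by (auto simp: power_less_one_iff)
  show ?thesis unfolding cf_def
    using rGamma_eq[OF a, of "\<mu> + real k + 1"]
    by (simp add: divide_inverse inverse_mult_distrib mult_ac)
qed

lemma qpoch_ge:
  assumes "0 < a" "a < 1"
  shows "(1 - a) ^ k \<le> qpoch a a k" "0 < qpoch a a k"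
proof -
  have "(\<Prod>i<k. 1 - a) \<le> (\<Prod>i<k. 1 - a * a ^ i)"
  proof (rule prod_mono)
    fix i assume "i \<in> {..<k}"
    have "a ^ i \<le> 1" using assms by (simp add: power_le_one)
    hence "a * a ^ i \<le> a" using assms mult_left_le[of "a^i" a] by linarith
    thus "0 \<le> 1 - a \<and> 1 - a \<le> 1 - a * a ^ i" using assms by simp
  qed
  thus "(1 - a) ^ k \<le> qpoch a a k" unfolding qpoch_def by simp
  moreover have "0 < (1 - a) ^ k" using assms by simp
  ultimately show "0 < qpoch a a k" by linarith
qed

definition T :: "real \<Rightarrow> complex \<Rightarrow> nat \<Rightarrow> complex \<Rightarrow> complex" where
  "T q w k s = complex_of_real ((1 - q\<^sup>2) ^ k / (qpoch (q\<^sup>2) (q\<^sup>2) k * qpoch_inf (q\<^sup>2) (q\<^sup>2)))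
     * exp (complex_of_real (ln q) * (of_nat k * (s + of_nat k)))
     * exp (complex_of_real (ln (1 - q\<^sup>2)) * (s + of_nat k))
     * Ec (q\<^sup>2) (exp (complex_of_real (ln (q\<^sup>2)) * (s + of_nat k + 1)))
     * (w / 2) powr (s + 2 * of_nat k)"

lemma cexp_real:
  fixes r y :: real
  assumes "r > 0"
  shows "exp (complex_of_real (ln r) * complex_of_real y) = complex_of_real (r powr y)"
  using assms by (simp add: powr_def exp_of_real[symmetric] mult.commute)

lemma T_real:
  assumes "0 < q" "q < 1"
  shows "T q w k (complex_of_real \<mu>) =
     complex_of_real (cf q \<mu> k) * (w / 2) powr complex_of_real (\<mu> + 2 * real k)"
proof -
  have a: "0 < q\<^sup>2" "q\<^sup>2 < 1" using assms by (auto simp: power_less_one_iff)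
  have e1: "exp (complex_of_real (ln q) * (of_nat k * (complex_of_real \<mu> + of_nat k)))
        = complex_of_real (q powr (real k * (\<mu> + real k)))"
    using cexp_real[OF assms(1), of "real k * (\<mu> + real k)"] by simp
  have e2: "exp (complex_of_real (ln (1 - q\<^sup>2)) * (complex_of_real \<mu> + of_nat k))
        = complex_of_real ((1 - q\<^sup>2) powr (\<mu> + real k))"
    using cexp_real[of "1 - q\<^sup>2" "\<mu> + real k"] a by simp
  have e3: "exp (complex_of_real (ln (q\<^sup>2)) * (complex_of_real \<mu> + of_nat k + 1))
        = complex_of_real ((q\<^sup>2) powr (\<mu> + real k + 1))"
    using cexp_real[of "q\<^sup>2" "\<mu> + real k + 1"] a by simp
  have e4: "complex_of_real \<mu> + 2 * of_nat k = complex_of_real (\<mu> + 2 * real k)" by simp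
  show ?thesis
    unfolding T_def e1 e2 e3 e4 Ec_of_real[OF a] cf_alt[OF assms]
    by (simp add: mult_ac)
qed


lemma compact_norm_bound:
  assumes "continuous_on K f" "compact K"
  obtains B where "\<And>x. x \<in> K \<Longrightarrow> norm (f x) \<le> B"
proof -
  have "bounded (f ` K)" by (rule compact_imp_bounded[OF compact_continuous_image[OF assms]])
  then obtain B where "\<And>y. y \<in> f ` K \<Longrightarrow> norm y \<le> B" unfolding bounded_iff by blast
  thus ?thesis using that by blast
qed

lemma summable_pow_tendsto0:
  fixes x :: "nat \<Rightarrow> real"
  assumes "x \<longlonglongrightarrow> 0" "\<And>k. 0 \<le> x k"
  shows "summable (\<lambda>k. C * x k ^ k)"
proof (rule summable_comparison_test_ev)
  have "eventually (\<lambda>k. x k < 1/2) sequentially"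
    using order_tendstoD(2)[OF assms(1), of "1/2"] by simp
  thus "eventually (\<lambda>k. norm (C * x k ^ k) \<le> \<bar>C\<bar> * (1/2) ^ k) sequentially"
  proof eventually_elim
    case (elim k)
    have "x k ^ k \<le> (1/2) ^ k" using elim assms(2)[of k] by (intro power_mono) auto
    thus ?case using assms(2)[of k] by (simp add: abs_mult mult_left_mono)
  qed
  show "summable (\<lambda>k. \<bar>C\<bar> * (1/2::real) ^ k)" by (intro summable_mult summable_geometric) auto
qed

lemma cpow2k: "(w::complex) \<noteq> 0 \<Longrightarrow> w powr (2 * of_nat k) = w ^ (2 * k)"
  using powr_complexpow[of w "2 * k"] by simp

lemma T_bound:
  assumes "0 < q" "q < 1" "w \<noteq> 0"
  shows "\<exists>M. summable M \<and> (\<forall>k. \<forall>s\<in>cball (complex_of_real c) 1. norm (T q w k s) \<le> M k)"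
proof -
  define a where "a = q\<^sup>2"
  have a: "0 < a" "a < 1" using assms by (auto simp: a_def power_less_one_iff)
  define Pa where "Pa = qpoch_inf a a"
  have Pa: "Pa \<noteq> 0" unfolding Pa_def by (rule Pa_nonzero[OF a])
  have cB1: "continuous_on (cball (complex_of_real c) 1) (\<lambda>s. (w / 2) powr s)"
    by (intro holomorphic_on_imp_continuous_on holomorphic_intros)
  obtain B1 where B1: "\<And>s. s \<in> cball (complex_of_real c) 1 \<Longrightarrow> norm ((w / 2) powr s) \<le> B1"
    using compact_norm_bound[OF cB1 compact_cball] by blast
  have cB2: "continuous_on (cball 0 (exp (ln a * c))) (Ec a)"
    using holomorphic_on_imp_continuous_on[OF Ec_holo[OF a]] by (rule continuous_on_subset) auto
  obtain B2 where B2: "\<And>x. x \<in> cball 0 (exp (ln a * c)) \<Longrightarrow> norm (Ec a x) \<le> B2"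
    using compact_norm_bound[OF cB2 compact_cball] by blast
  have B1p: "0 \<le> B1" using B1[of "complex_of_real c"] norm_ge_zero[of "(w / 2) powr complex_of_real c"]
    by (auto simp del: norm_ge_zero)
  have B2p: "0 \<le> B2" using B2[of 0] norm_ge_zero[of "Ec a 0"] by (auto simp del: norm_ge_zero)
  define \<rho> where "\<rho> = norm (w / 2) ^ 2"
  define C where "C = (1 / \<bar>Pa\<bar>) * exp (ln (1 - a) * (c - 1)) * B2 * B1"
  define x where "x = (\<lambda>k::nat. exp (ln q * (c - 1 + real k)) * \<rho>)"
  define M where "M = (\<lambda>k. C * x k ^ k)"
  have lnq: "ln q < 0" using assms by simp
  have lna1: "ln (1 - a) < 0" using a by simp
  have lna: "ln a < 0" using a by simp
  have "summable M" unfolding M_def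
  proof (rule summable_pow_tendsto0)
    have eq: "exp (real k * ln q) = q ^ k" for k
      using exp_of_nat_mult[of k "ln q"] assms by simp
    have "x = (\<lambda>k. exp (ln q * (c - 1)) * \<rho> * q ^ k)"
      unfolding x_def using assms eq
      by (auto simp: fun_eq_iff distrib_left exp_add exp_of_nat_mult[symmetric] mult_ac)
    moreover have "(\<lambda>k. exp (ln q * (c - 1)) * \<rho> * q ^ k) \<longlonglongrightarrow> exp (ln q * (c - 1)) * \<rho> * 0"
      using assms by (intro tendsto_mult tendsto_const LIMSEQ_power_zero) auto
    ultimately show "x \<longlonglongrightarrow> 0" by simp
    show "0 \<le> x k" for k unfolding x_def \<rho>_def by simp
  qed
  moreover have "norm (T q w k s) \<le> M k" if s: "s \<in> cball (complex_of_real c) 1" for k s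
  proof -
    have "\<bar>Re s - c\<bar> \<le> 1"
      using s abs_Re_le_cmod[of "s - complex_of_real c"] by (simp add: dist_norm norm_minus_commute)
    hence Res: "c - 1 \<le> Re s" by linarith
    have n1: "norm (complex_of_real ((1 - a) ^ k / (qpoch a a k * Pa))) \<le> 1 / \<bar>Pa\<bar>"
    proof -
      have "(1 - a) ^ k / qpoch a a k \<le> 1" using qpoch_ge[OF a, of k] by simp
      moreover have "0 \<le> (1 - a) ^ k / qpoch a a k" using qpoch_ge[OF a, of k] a by simp
      ultimately have "(1 - a) ^ k / qpoch a a k / \<bar>Pa\<bar> \<le> 1 / \<bar>Pa\<bar>"
        using Pa by (intro divide_right_mono) auto
      thus ?thesis using qpoch_ge[OF a, of k] a by (subst norm_of_real) (simp add: abs_mult)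
    qed
    have n2: "norm (exp (complex_of_real (ln q) * (of_nat k * (s + of_nat k)))) \<le> exp (ln q * (c - 1 + real k)) ^ k"
    proof -
      have "real k * (c - 1 + real k) \<le> real k * (Re s + real k)"
        using Res by (intro mult_left_mono) auto
      hence "ln q * (real k * (Re s + real k)) \<le> ln q * (real k * (c - 1 + real k))"
        by (rule mult_left_mono_neg) (use lnq in auto)
      hence "exp (ln q * (real k * (Re s + real k))) \<le> exp (ln q * (real k * (c - 1 + real k)))"
        by simp
      also have "\<dots> = exp (ln q * (c - 1 + real k)) ^ k"
        by (simp add: exp_of_nat_mult[symmetric] mult_ac)
      finally show ?thesis by simp
    qed
    have n3: "norm (exp (complex_of_real (ln (1 - a)) * (s + of_nat k))) \<le> exp (ln (1 - a) * (c - 1))"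
    proof -
      have "c - 1 \<le> Re s + real k" using Res by simp
      hence "ln (1 - a) * (Re s + real k) \<le> ln (1 - a) * (c - 1)"
        by (rule mult_left_mono_neg) (use lna1 in auto)
      thus ?thesis by simp
    qed
    have n4: "norm (Ec a (exp (complex_of_real (ln a) * (s + of_nat k + 1)))) \<le> B2"
    proof (rule B2)
      have "c \<le> Re s + real k + 1" using Res by simp
      hence "ln a * (Re s + real k + 1) \<le> ln a * c"
        by (rule mult_left_mono_neg) (use lna in auto)
      thus "exp (complex_of_real (ln a) * (s + of_nat k + 1)) \<in> cball 0 (exp (ln a * c))"
        by simp
    qed
    have n5: "norm ((w / 2) powr (s + 2 * of_nat k)) \<le> B1 * \<rho> ^ k"
    proof -
      have "(w / 2) powr (s + 2 * of_nat k) = (w / 2) powr s * (w / 2) ^ (2 * k)"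
        using assms(3) by (simp add: powr_add cpow2k)
      hence "norm ((w / 2) powr (s + 2 * of_nat k)) = norm ((w / 2) powr s) * \<rho> ^ k"
        by (simp add: norm_mult norm_power \<rho>_def power_mult)
      thus ?thesis using B1[OF s] by (simp add: mult_right_mono \<rho>_def)
    qed
    have "norm (T q w k s) =
        norm (complex_of_real ((1 - a) ^ k / (qpoch a a k * Pa)))
      * norm (exp (complex_of_real (ln q) * (of_nat k * (s + of_nat k))))
      * norm (exp (complex_of_real (ln (1 - a)) * (s + of_nat k)))
      * norm (Ec a (exp (complex_of_real (ln a) * (s + of_nat k + 1))))
      * norm ((w / 2) powr (s + 2 * of_nat k))"
      unfolding T_def a_def Pa_def by (simp only: norm_mult)
    also have "\<dots> \<le> (1 / \<bar>Pa\<bar>) * exp (ln q * (c - 1 + real k)) ^ k * exp (ln (1 - a) * (c - 1))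
        * B2 * (B1 * \<rho> ^ k)"
      using n1 n2 n3 n4 n5 B1p B2p by (intro mult_mono mult_nonneg_nonneg) auto
    also have "\<dots> = M k"
      unfolding M_def C_def x_def by (simp add: power_mult_distrib mult_ac)
    finally show ?thesis .
  qed
  ultimately show ?thesis by blast
qed


definition Ic :: "real \<Rightarrow> complex \<Rightarrow> complex \<Rightarrow> complex" where
  "Ic q w s = (\<Sum>k. T q w k s)"

lemma T_holo:
  assumes "0 < q" "q < 1"
  shows "T q w k holomorphic_on S"
proof -
  have a: "0 < q\<^sup>2" "q\<^sup>2 < 1" using assms by (auto simp: power_less_one_iff)
  show ?thesis unfolding T_def
    by (intro holomorphic_intros Ec_holo'[OF a])
qed

lemma T_summable:
  assumes "0 < q" "q < 1" "w \<noteq> 0"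
  shows "summable (\<lambda>k. T q w k (complex_of_real \<mu>))"
proof -
  obtain M where M: "summable M" "\<And>k t. t \<in> cball (complex_of_real \<mu>) 1 \<Longrightarrow> norm (T q w k t) \<le> M k"
    using T_bound[OF assms, of "\<mu>"] by blast
  have "complex_of_real \<mu> \<in> cball (complex_of_real \<mu>) 1"
    by simp
  thus ?thesis using M by (intro summable_comparison_test[OF _ M(1)]) auto
qed

lemma Ic_holo:
  assumes "0 < q" "q < 1" "w \<noteq> 0"
  shows "Ic q w holomorphic_on ball (complex_of_real c) 1"
proof -
  obtain M where M: "summable M" "\<And>k t. t \<in> cball (complex_of_real c) 1 \<Longrightarrow> norm (T q w k t) \<le> M k"
    using T_bound[OF assms, of c] by blast
  have ul: "uniform_limit (cball (complex_of_real c) 1) (\<lambda>n s. \<Sum>k<n. T q w k s) (Ic q w) sequentially"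
    unfolding Ic_def by (rule Weierstrass_m_test[OF M(2) M(1)])
  have "continuous_on (cball (complex_of_real c) 1) (Ic q w) \<and> Ic q w holomorphic_on ball (complex_of_real c) 1"
    by (rule holomorphic_uniform_limit[OF _ ul])
       (auto intro!: always_eventually holomorphic_intros T_holo[OF assms(1,2)]
             holomorphic_on_imp_continuous_on)
  thus ?thesis by blast
qed

lemma I3_Ic:
  assumes "0 < q" "q < 1"
  shows "I3 q \<mu> w = Ic q w (complex_of_real \<mu>)"
  unfolding I3_cf Ic_def T_real[OF assms] ..

lemma I3_sums:
  assumes "0 < q" "q < 1" "w \<noteq> 0"
  shows "(\<lambda>k. complex_of_real (cf q \<mu> k) * (w / 2) powr complex_of_real (\<mu> + 2 * real k)) sums I3 q \<mu> w"
proof -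
  have "summable (\<lambda>k. T q w k (complex_of_real \<mu>))" by (rule T_summable[OF assms])
  thus ?thesis unfolding I3_cf T_real[OF assms(1,2)] by (rule summable_sums)
qed


lemma cf_neg_small:
  assumes "0 < q" "q < 1" "k < m"
  shows "cf q (- real m) k = 0"
proof -
  have a: "0 < q\<^sup>2" "q\<^sup>2 < 1" using assms by (auto simp: power_less_one_iff)
  have "(q\<^sup>2) powr (- real m + real k + 1) * (q\<^sup>2) ^ (m - k - 1) = (q\<^sup>2) powr (- real m + real k + 1 + real (m - k - 1))"
    using a by (simp add: powr_add powr_realpow)
  also have "- real m + real k + 1 + real (m - k - 1) = 0" using assms(3) by (simp add: of_nat_diff)
  finally have eq: "(q\<^sup>2) powr (- real m + real k + 1) * (q\<^sup>2) ^ (m - k - 1) = 1"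
    using assms by simp
  have "qpoch_inf ((q\<^sup>2) powr (- real m + real k + 1)) (q\<^sup>2) = 0"
    by (rule qpinf_zero[OF a eq])
  thus ?thesis unfolding cf_alt[OF assms(1,2)] by simp
qed

lemma cf_neg_shift:
  assumes "0 < q" "q < 1"
  shows "cf q (- real m) (j + m) = cf q (real m) j"
proof -
  have a: "0 < q\<^sup>2" "q\<^sup>2 < 1" using assms by (auto simp: power_less_one_iff)
  have pw: "(1 - q\<^sup>2) powr (- real n) = inverse ((1 - q\<^sup>2) ^ n)" for n
    by (subst powr_minus, subst powr_realpow) (use a in auto)
  have ex1: "- real m + real (j + m) + 1 = real j + 1" by simp
  have g1: "qGamma (q\<^sup>2) (- real m + real (j + m) + 1) = qpoch (q\<^sup>2) (q\<^sup>2) j * inverse ((1 - q\<^sup>2) ^ j)"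
    unfolding ex1 qGamma_nat[OF a, of j] pw ..
  have ex2: "real m + real j + 1 = real (j + m) + 1" by simp
  have g2: "qGamma (q\<^sup>2) (real m + real j + 1) = qpoch (q\<^sup>2) (q\<^sup>2) (j + m) * inverse ((1 - q\<^sup>2) ^ (j + m))"
    unfolding ex2 qGamma_nat[OF a, of "j + m"] pw ..
  have e: "real (j + m) * (- real m + real (j + m)) = real j * (real m + real j)" by (simp add: algebra_simps)
  have p1: "0 < qpoch (q\<^sup>2) (q\<^sup>2) j" "0 < qpoch (q\<^sup>2) (q\<^sup>2) (j + m)" using qpoch_ge[OF a] by auto
  show ?thesis unfolding cf_def g1 g2 e
    using p1 a by (simp add: field_simps power_add)
qed

lemma I3_int_sym:
  assumes "0 < q" "q < 1" "w \<noteq> 0"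
  shows "I3 q (- real m) w = I3 q (real m) w"
proof -
  let ?f = "\<lambda>\<mu> k. complex_of_real (cf q \<mu> k) * (w / 2) powr complex_of_real (\<mu> + 2 * real k)"
  have s1: "?f (- real m) sums I3 q (- real m) w" by (rule I3_sums[OF assms])
  have "(\<Sum>i<m. ?f (- real m) i) = 0" using cf_neg_small[OF assms(1,2)] by simp
  hence "(\<lambda>i. ?f (- real m) (i + m)) sums I3 q (- real m) w"
    using s1 by (subst sums_iff_shift) simp
  moreover have "(\<lambda>i. ?f (- real m) (i + m)) = ?f (real m)"
  proof (rule ext)
    fix i
    have ex: "- real m + 2 * real (i + m) = real m + 2 * real i" by simp
    show "?f (- real m) (i + m) = ?f (real m) i" by (simp only: cf_neg_shift[OF assms(1,2)] ex)
  qed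
  ultimately have "?f (real m) sums I3 q (- real m) w" by (simp only:)
  moreover have "?f (real m) sums I3 q (real m) w" by (rule I3_sums[OF assms])
  ultimately show ?thesis by (rule sums_unique2)
qed




lemma qsq_powr: "(q\<^sup>2) powr y = (q powr y)\<^sup>2" for q :: real
  by (simp add: power2_eq_square powr_mult)

definition Cr :: "real \<Rightarrow> real \<Rightarrow> real" where
  "Cr q \<nu> = 1/2 * q powr (- (\<nu>\<^sup>2) + \<nu>) * qGamma (q\<^sup>2) \<nu> * qGamma (q\<^sup>2) (1 - \<nu>)"

lemma K3f_Cr: "K3_formula q \<nu> z = complex_of_real (Cr q \<nu>) * (I3 q (- \<nu>) z - I3 q \<nu> z)"
  unfolding K3_formula_def Cr_def by (simp add: mult_ac)

lemma nonint_shift: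
  fixes \<nu> :: real
  assumes "\<nu> \<notin> \<int>" "c \<in> \<int>"
  shows "\<nu> + c \<notin> \<int>" "c - \<nu> \<notin> \<int>" "\<nu> - c \<notin> \<int>" "- \<nu> \<notin> \<int>" "\<nu> \<noteq> 0"
proof -
  show 1: "\<nu> + c \<notin> \<int>"
  proof
    assume "\<nu> + c \<in> \<int>"
    hence "\<nu> + c - c \<in> \<int>" using assms(2) by (intro Ints_diff)
    thus False using assms(1) by simp
  qed
  show "c - \<nu> \<notin> \<int>"
  proof
    assume "c - \<nu> \<in> \<int>"
    thus False using Ints_diff[OF assms(2) \<open>c - \<nu> \<in> \<int>\<close>] assms(1) by simp
  qed
  show "\<nu> - c \<notin> \<int>"
  proof
    assume "\<nu> - c \<in> \<int>"
    hence "\<nu> - c + c \<in> \<int>" using assms(2) by (intro Ints_add)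
    thus False using assms(1) by simp
  qed
  show "- \<nu> \<notin> \<int>"
  proof
    assume "- \<nu> \<in> \<int>"
    thus False using Ints_minus[OF \<open>- \<nu> \<in> \<int>\<close>] assms(1) by simp
  qed
  show "\<nu> \<noteq> 0" using assms by auto
qed

lemma Cr_neg:
  assumes "0 < q" "q < 1" "\<nu> \<notin> \<int>"
  shows "Cr q (- \<nu>) = - Cr q \<nu>"
proof -
  have a: "0 < q\<^sup>2" "q\<^sup>2 < 1" using assms by (auto simp: power_less_one_iff)
  define E where "E = (\<lambda>y. qpoch_inf ((q\<^sup>2) powr y) (q\<^sup>2))"
  define P where "P = qpoch_inf (q\<^sup>2) (q\<^sup>2)"
  define t where "t = q powr \<nu>"
  define Q where "Q = q powr (- (\<nu>\<^sup>2))"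
  have t: "0 < t" unfolding t_def using assms by simp
  have t1: "t\<^sup>2 \<noteq> 1"
  proof
    assume "t\<^sup>2 = 1"
    hence "t = 1" using t power2_eq_iff_nonneg[of t 1] by simp
    hence "q powr \<nu> = 1" unfolding t_def .
    hence "\<nu> = 0" using assms by simp
    thus False using assms(3) by simp
  qed
  have g1: "qGamma (q\<^sup>2) (- \<nu>) * qGamma (q\<^sup>2) (1 - - \<nu>) = P\<^sup>2 * (1 - q\<^sup>2) / (E (- \<nu>) * E (1 - - \<nu>))"
    unfolding E_def P_def by (rule qGamma_refl_prod[OF a])
  have g2: "qGamma (q\<^sup>2) \<nu> * qGamma (q\<^sup>2) (1 - \<nu>) = P\<^sup>2 * (1 - q\<^sup>2) / (E \<nu> * E (1 - \<nu>))"
    unfolding E_def P_def by (rule qGamma_refl_prod[OF a])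
  have e1: "1 - - \<nu> = \<nu> + 1" by simp
  have e2: "- \<nu> + 1 = 1 - \<nu>" by simp
  have pm: "(q\<^sup>2) powr (- \<nu>) = 1 / t\<^sup>2"
  proof -
    have "(q\<^sup>2) powr (- \<nu>) = (q powr (- \<nu>))\<^sup>2" by (rule qsq_powr)
    also have "q powr (- \<nu>) = inverse t" unfolding t_def by (rule powr_minus)
    finally show ?thesis by (simp add: power_inverse divide_inverse)
  qed
  have pp: "(q\<^sup>2) powr \<nu> = t\<^sup>2" unfolding t_def by (rule qsq_powr)
  have s1: "E (- \<nu>) = (1 - 1 / t\<^sup>2) * E (1 - \<nu>)"
    using qpinf_powr_step[OF a, of "- \<nu>"] unfolding E_def pm e2 .
  have s2: "E \<nu> = (1 - t\<^sup>2) * E (\<nu> + 1)"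
    using qpinf_powr_step[OF a, of "\<nu>"] unfolding E_def pp .
  have i1: "1 - \<nu> \<notin> \<int>" using nonint_shift(2)[OF assms(3), of 1] by simp
  have i2: "\<nu> + 1 \<notin> \<int>" using nonint_shift(1)[OF assms(3), of 1] by simp
  have n1: "E (1 - \<nu>) \<noteq> 0" "E (\<nu> + 1) \<noteq> 0" unfolding E_def
    by (rule qpinf_powr_nonzero[OF a i1], rule qpinf_powr_nonzero[OF a i2])
  have ex: "- ((- \<nu>)\<^sup>2) + - \<nu> = - (\<nu>\<^sup>2) - \<nu>" by simp
  have p1: "q powr (- ((- \<nu>)\<^sup>2) + - \<nu>) = Q / t" unfolding Q_def t_def
    by (simp only: ex powr_diff)
  have p2: "q powr (- (\<nu>\<^sup>2) + \<nu>) = Q * t" unfolding Q_def t_def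
    by (simp only: powr_add)
  have "Cr q (- \<nu>) = 1/2 * (q powr (- ((- \<nu>)\<^sup>2) + - \<nu>) * (qGamma (q\<^sup>2) (- \<nu>) * qGamma (q\<^sup>2) (1 - - \<nu>)))"
    unfolding Cr_def by (simp only: mult.assoc)
  also have "\<dots> = 1/2 * (Q / t * (P\<^sup>2 * (1 - q\<^sup>2) / ((1 - 1 / t\<^sup>2) * E (1 - \<nu>) * E (\<nu> + 1))))"
    by (simp only: p1 g1 s1, simp only: e1)
  also have "\<dots> = - (1/2 * (Q * t) * (P\<^sup>2 * (1 - q\<^sup>2) / ((1 - t\<^sup>2) * E (\<nu> + 1) * E (1 - \<nu>))))"
  proof -
    have "1 - 1 / t\<^sup>2 = - (1 - t\<^sup>2) / t\<^sup>2" using t by (simp add: field_simps)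
    thus ?thesis using t t1 n1 by (simp add: field_simps power2_eq_square)
  qed
  also have "\<dots> = - (1/2 * (q powr (- (\<nu>\<^sup>2) + \<nu>) * (qGamma (q\<^sup>2) \<nu> * qGamma (q\<^sup>2) (1 - \<nu>))))"
    by (simp only: p2 g2 s2 mult.assoc)
  also have "\<dots> = - Cr q \<nu>"
    unfolding Cr_def by (simp only: mult.assoc)
  finally show ?thesis .
qed

lemma Cr_shift:
  assumes "0 < q" "q < 1" "\<nu> \<notin> \<int>"
  shows "Cr q (\<nu> - 1) = - Cr q \<nu>"
proof -
  have a: "0 < q\<^sup>2" "q\<^sup>2 < 1" using assms by (auto simp: power_less_one_iff)
  define E where "E = (\<lambda>y. qpoch_inf ((q\<^sup>2) powr y) (q\<^sup>2))"
  define P where "P = qpoch_inf (q\<^sup>2) (q\<^sup>2)"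
  define t where "t = q powr \<nu>"
  define Q where "Q = q powr (- (\<nu>\<^sup>2))"
  have t: "0 < t" unfolding t_def using assms(1) by simp
  have t1: "t\<^sup>2 \<noteq> q\<^sup>2"
  proof
    assume "t\<^sup>2 = q\<^sup>2"
    hence "t = q" using t assms(1) power2_eq_iff_nonneg[of t q] by simp
    hence "q powr \<nu> = q powr 1" unfolding t_def using assms(1) by simp
    hence "\<nu> = 1" using assms(1,2) powr_inj[of q \<nu> 1] by simp
    thus False using assms(3) by simp
  qed
  have g1: "qGamma (q\<^sup>2) (\<nu> - 1) * qGamma (q\<^sup>2) (1 - (\<nu> - 1)) = P\<^sup>2 * (1 - q\<^sup>2) / (E (\<nu> - 1) * E (1 - (\<nu> - 1)))"
    unfolding E_def P_def by (rule qGamma_refl_prod[OF a])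
  have g2: "qGamma (q\<^sup>2) \<nu> * qGamma (q\<^sup>2) (1 - \<nu>) = P\<^sup>2 * (1 - q\<^sup>2) / (E \<nu> * E (1 - \<nu>))"
    unfolding E_def P_def by (rule qGamma_refl_prod[OF a])
  have e1: "1 - (\<nu> - 1) = 2 - \<nu>" by simp
  have e2: "\<nu> - 1 + 1 = \<nu>" by simp
  have e3: "1 - \<nu> + 1 = 2 - \<nu>" by simp
  have pa: "(q\<^sup>2) powr (\<nu> - 1) = t\<^sup>2 / q\<^sup>2"
  proof -
    have "(q\<^sup>2) powr (\<nu> - 1) = (q powr (\<nu> - 1))\<^sup>2" by (rule qsq_powr)
    also have "q powr (\<nu> - 1) = t / q" unfolding t_def using assms(1) by (simp add: powr_diff)
    finally show ?thesis by (simp add: power_divide)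
  qed
  have pb: "(q\<^sup>2) powr (1 - \<nu>) = q\<^sup>2 / t\<^sup>2"
  proof -
    have "(q\<^sup>2) powr (1 - \<nu>) = (q powr (1 - \<nu>))\<^sup>2" by (rule qsq_powr)
    also have "q powr (1 - \<nu>) = q / t" unfolding t_def using assms(1) by (simp add: powr_diff)
    finally show ?thesis by (simp add: power_divide)
  qed
  have s1: "E (\<nu> - 1) = (1 - t\<^sup>2 / q\<^sup>2) * E \<nu>"
    using qpinf_powr_step[OF a, of "\<nu> - 1"] unfolding E_def pa e2 .
  have s2: "E (1 - \<nu>) = (1 - q\<^sup>2 / t\<^sup>2) * E (2 - \<nu>)"
    using qpinf_powr_step[OF a, of "1 - \<nu>"] unfolding E_def pb e3 .
  have i2: "2 - \<nu> \<notin> \<int>" using nonint_shift(2)[OF assms(3), of 2] by simp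
  have n1: "E \<nu> \<noteq> 0" "E (2 - \<nu>) \<noteq> 0" unfolding E_def
    by (rule qpinf_powr_nonzero[OF a assms(3)], rule qpinf_powr_nonzero[OF a i2])
  have p1: "q powr (- ((\<nu> - 1)\<^sup>2) + (\<nu> - 1)) = Q * t ^ 3 / q\<^sup>2"
  proof -
    have "- ((\<nu> - 1)\<^sup>2) + (\<nu> - 1) = - (\<nu>\<^sup>2) + 3 * \<nu> - 2" by (simp add: power2_eq_square algebra_simps)
    hence "q powr (- ((\<nu> - 1)\<^sup>2) + (\<nu> - 1)) = Q * q powr (3 * \<nu>) / q powr 2"
      unfolding Q_def by (simp only: powr_add powr_diff)
    moreover have "q powr (3 * \<nu>) = t ^ 3" using powr_power[of q \<nu> 3] assms unfolding t_def by simp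
    moreover have "q powr 2 = q\<^sup>2" using assms by simp
    ultimately show ?thesis by simp
  qed
  have p2: "q powr (- (\<nu>\<^sup>2) + \<nu>) = Q * t" unfolding Q_def t_def
    by (simp only: powr_add)
  have "Cr q (\<nu> - 1) = 1/2 * (q powr (- ((\<nu> - 1)\<^sup>2) + (\<nu> - 1)) * (qGamma (q\<^sup>2) (\<nu> - 1) * qGamma (q\<^sup>2) (1 - (\<nu> - 1))))"
    unfolding Cr_def by (simp only: mult.assoc)
  also have "\<dots> = 1/2 * (Q * t ^ 3 / q\<^sup>2 * (P\<^sup>2 * (1 - q\<^sup>2) / ((1 - t\<^sup>2 / q\<^sup>2) * E \<nu> * E (2 - \<nu>))))"
    by (simp only: p1 g1 s1, simp only: e1)
  also have "\<dots> = - (1/2 * (Q * t) * (P\<^sup>2 * (1 - q\<^sup>2) / (E \<nu> * ((1 - q\<^sup>2 / t\<^sup>2) * E (2 - \<nu>)))))"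
  proof -
    have h1: "1 - t\<^sup>2 / q\<^sup>2 = (q\<^sup>2 - t\<^sup>2) / q\<^sup>2" using assms(1) by (simp add: field_simps)
    have h2: "1 - q\<^sup>2 / t\<^sup>2 = - (q\<^sup>2 - t\<^sup>2) / t\<^sup>2" using t by (simp add: field_simps)
    have h3: "q\<^sup>2 - t\<^sup>2 \<noteq> 0" using t1 by simp
    show ?thesis unfolding h1 h2 using t h3 n1 assms(1) by (simp add: field_simps power2_eq_square power3_eq_cube)
  qed
  also have "\<dots> = - (1/2 * (q powr (- (\<nu>\<^sup>2) + \<nu>) * (qGamma (q\<^sup>2) \<nu> * qGamma (q\<^sup>2) (1 - \<nu>))))"
    by (simp only: p2 g2 s2 mult.assoc)
  also have "\<dots> = - Cr q \<nu>"
    unfolding Cr_def by (simp only: mult.assoc)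
  finally show ?thesis .
qed



lemma cpow_rmult:
  fixes r x :: real and w :: complex
  assumes "r > 0" "w \<noteq> 0"
  shows "(complex_of_real r * w) powr complex_of_real x = complex_of_real (r powr x) * w powr complex_of_real x"
proof -
  have "(complex_of_real r * w) powr complex_of_real x = exp (complex_of_real x * Ln (complex_of_real r * w))"
    using assms by (simp add: powr_def)
  also have "Ln (complex_of_real r * w) = complex_of_real (ln r) + Ln w"
    using assms by (simp add: Ln_times_of_real Ln_of_real)
  also have "exp (complex_of_real x * (complex_of_real (ln r) + Ln w)) =
      exp (complex_of_real (ln r) * complex_of_real x) * exp (complex_of_real x * Ln w)"
    by (simp add: distrib_left exp_add mult.commute)
  also have "exp (complex_of_real (ln r) * complex_of_real x) = complex_of_real (r powr x)"
    by (rule cexp_real[OF assms(1)])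
  also have "exp (complex_of_real x * Ln w) = w powr complex_of_real x"
    using assms by (simp add: powr_def)
  finally show ?thesis .
qed

lemma alg1:
  fixes A B b Qj c E D P :: real
  assumes "Qj \<noteq> 0" "c \<noteq> 0" "P \<noteq> 0" "b \<noteq> 0"
  shows "A * B * b ^ Suc j / (Qj * c) * (E * D / P) * c / b
       = B * (A * b ^ j / Qj * (E * D / P))"
  using assms by (simp add: field_simps)

lemma alg2:
  fixes A B b Qk c E D P :: real
  assumes "Qk \<noteq> 0" "P \<noteq> 0" "b \<noteq> 0"
  shows "A * B * b ^ k / Qk * (E * D / P) * c / b
       = B * (A * b ^ k / Qk * (c * E * (D / b) / P))"
  using assms by (simp add: field_simps)

lemma cfA:
  assumes "0 < q" "q < 1"
  shows "cf q (- \<nu>) (Suc j) * (1 - q ^ (2 * Suc j)) / (1 - q\<^sup>2) = q powr (real j + 1 - \<nu>) * cf q (1 - \<nu>) j"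
proof -
  have a: "0 < q\<^sup>2" "q\<^sup>2 < 1" using assms by (auto simp: power_less_one_iff)
  define E where "E = qpoch_inf ((q\<^sup>2) powr (2 - \<nu> + real j)) (q\<^sup>2)"
  define P where "P = qpoch_inf (q\<^sup>2) (q\<^sup>2)"
  define D where "D = (1 - q\<^sup>2) powr (1 - \<nu> + real j)"
  define Qj where "Qj = qpoch (q\<^sup>2) (q\<^sup>2) j"
  have Qj: "0 < Qj" unfolding Qj_def using qpoch_ge[OF a] by simp
  have "q ^ (2 * Suc j) = q\<^sup>2 * (q\<^sup>2) ^ j" by (simp only: power_mult power_Suc)
  hence qs: "qpoch (q\<^sup>2) (q\<^sup>2) (Suc j) = Qj * (1 - q ^ (2 * Suc j))"
    unfolding qpoch_Suc Qj_def by simp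
  have "q ^ (2 * Suc j) < 1" using power_strict_decreasing[of 0 "2 * Suc j" q] assms by simp
  hence nz: "1 - q ^ (2 * Suc j) \<noteq> 0" by simp
  have x1: "- \<nu> + real (Suc j) + 1 = 2 - \<nu> + real j" by simp
  have x2: "- \<nu> + real (Suc j) = 1 - \<nu> + real j" by simp
  have x3: "1 - \<nu> + real j + 1 = 2 - \<nu> + real j" by simp
  have x4: "q powr (real (Suc j) * (- \<nu> + real (Suc j))) = q powr (real j * (1 - \<nu> + real j)) * q powr (real j + 1 - \<nu>)"
  proof -
    have "real (Suc j) * (- \<nu> + real (Suc j)) = real j * (1 - \<nu> + real j) + (real j + 1 - \<nu>)"
      by (simp add: algebra_simps)
    thus ?thesis by (simp add: powr_add)
  qed
  have "cf q (- \<nu>) (Suc j) = q powr (real j * (1 - \<nu> + real j)) * q powr (real j + 1 - \<nu>) * (1 - q\<^sup>2) ^ Suc j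
      / (Qj * (1 - q ^ (2 * Suc j))) * (E * D / P)"
    unfolding cf_alt[OF assms] x1 x4 unfolding x2 qs E_def D_def P_def ..
  moreover have "cf q (1 - \<nu>) j = q powr (real j * (1 - \<nu> + real j)) * (1 - q\<^sup>2) ^ j / Qj * (E * D / P)"
    unfolding cf_alt[OF assms] x3 E_def D_def P_def Qj_def ..
  ultimately show ?thesis using alg1[of Qj "1 - q ^ (2 * Suc j)" P "1 - q\<^sup>2"] Qj nz a Pa_nonzero[OF a]
    unfolding P_def by simp
qed

lemma cfB:
  assumes "0 < q" "q < 1"
  shows "cf q \<nu> k * (1 - q powr (2 * \<nu> + 2 * real k)) / (1 - q\<^sup>2) = q ^ k * cf q (\<nu> - 1) k"
proof -
  have a: "0 < q\<^sup>2" "q\<^sup>2 < 1" using assms by (auto simp: power_less_one_iff)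
  define E where "E = qpoch_inf ((q\<^sup>2) powr (\<nu> + real k + 1)) (q\<^sup>2)"
  define P where "P = qpoch_inf (q\<^sup>2) (q\<^sup>2)"
  define D where "D = (1 - q\<^sup>2) powr (\<nu> + real k)"
  define Qk where "Qk = qpoch (q\<^sup>2) (q\<^sup>2) k"
  have Qk: "0 < Qk" unfolding Qk_def using qpoch_ge[OF a] by simp
  have x1: "\<nu> - 1 + real k + 1 = \<nu> + real k" by simp
  have st: "qpoch_inf ((q\<^sup>2) powr (\<nu> + real k)) (q\<^sup>2) = (1 - q powr (2 * \<nu> + 2 * real k)) * E"
  proof -
    have "(q\<^sup>2) powr (\<nu> + real k) = q powr (2 * \<nu> + 2 * real k)"
      unfolding qsq_powr using powr_power[of q "\<nu> + real k" 2] assms by (simp add: algebra_simps)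
    thus ?thesis using qpinf_powr_step[OF a, of "\<nu> + real k"] unfolding E_def by simp
  qed
  have x2: "(1 - q\<^sup>2) powr (\<nu> - 1 + real k) = D / (1 - q\<^sup>2)"
  proof -
    have e: "\<nu> - 1 + real k = (\<nu> + real k) - 1" by simp
    have f: "(1 - q\<^sup>2) powr ((\<nu> + real k) - 1) = (1 - q\<^sup>2) powr (\<nu> + real k) / (1 - q\<^sup>2) powr 1"
      by (rule powr_diff)
    have g: "(1 - q\<^sup>2) powr 1 = 1 - q\<^sup>2" using a by simp
    show ?thesis unfolding D_def by (simp only: e f g)
  qed
  have x3: "q powr (real k * (\<nu> + real k)) = q powr (real k * (\<nu> - 1 + real k)) * q ^ k"
  proof -
    have "real k * (\<nu> + real k) = real k * (\<nu> - 1 + real k) + real k" by (simp add: algebra_simps)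
    thus ?thesis using assms by (simp add: powr_add powr_realpow)
  qed
  have "cf q \<nu> k = q powr (real k * (\<nu> - 1 + real k)) * q ^ k * (1 - q\<^sup>2) ^ k / Qk * (E * D / P)"
    unfolding cf_alt[OF assms] x3 E_def D_def P_def Qk_def ..
  moreover have "cf q (\<nu> - 1) k = q powr (real k * (\<nu> - 1 + real k)) * (1 - q\<^sup>2) ^ k / Qk
      * ((1 - q powr (2 * \<nu> + 2 * real k)) * E * (D / (1 - q\<^sup>2)) / P)"
    unfolding cf_alt[OF assms] x1 x2 st Qk_def P_def ..
  ultimately show ?thesis using alg2[of Qk P "1 - q\<^sup>2"] Qk a Pa_nonzero[OF a]
    unfolding P_def by simp
qed


lemma Gstep:
  fixes q r c :: real and u X :: complex
  assumes "u \<noteq> 0" "0 < q" "q < 1"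
  shows "2 / ((1 + complex_of_real q) * (2 * u)) *
          ((complex_of_real r * X - complex_of_real c * (complex_of_real r * X)) / ((1 - complex_of_real q) * (2 * u)))
       = complex_of_real (r * (1 - c) / (2 * (1 - q\<^sup>2))) * (X / u\<^sup>2)"
proof -
  have h1: "1 + complex_of_real q \<noteq> 0"
    by (metis add.inverse_unique assms(2) neg_0_less_iff_less of_real_1 of_real_eq_iff of_real_minus zero_less_one
        less_asym')
  have h2: "1 - complex_of_real q \<noteq> 0" using assms(3) by (metis eq_iff_diff_eq_0 of_real_1 of_real_eq_iff less_irrefl)
  have "q\<^sup>2 < 1" using assms by (auto simp: power_less_one_iff)
  hence h3: "1 - q\<^sup>2 \<noteq> 0" by simp
  have "complex_of_real (1 - q\<^sup>2) = (1 + complex_of_real q) * (1 - complex_of_real q)"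
    by (simp add: algebra_simps power2_eq_square)
  moreover have "complex_of_real (1 - q\<^sup>2) \<noteq> 0" using h3 of_real_eq_0_iff by blast
  ultimately show ?thesis using h1 h2 assms(1)
    by (simp add: field_simps power2_eq_square of_real_mult of_real_diff)
qed

lemma zpow:
  fixes z :: complex and x :: real
  assumes "z \<noteq> 0"
  shows "z powr complex_of_real x = complex_of_real (2 powr x) * (z / 2) powr complex_of_real x"
proof -
  have "z = complex_of_real 2 * (z / 2)" by simp
  hence "z powr complex_of_real x = (complex_of_real 2 * (z / 2)) powr complex_of_real x" by simp
  also have "\<dots> = complex_of_real (2 powr x) * (z / 2) powr complex_of_real x"
    by (rule cpow_rmult) (use assms in auto)
  finally show ?thesis .
qed

lemma upow_add:
  fixes u :: complex and x y :: real
  shows "u powr complex_of_real x * u powr complex_of_real y = u powr complex_of_real (x + y)"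
  by (simp add: powr_add)

lemma upow_nat2:
  fixes u :: complex
  assumes "u \<noteq> 0"
  shows "u powr complex_of_real (2 * real k) = u ^ (2 * k)"
  using cpow2k[OF assms, of k] by simp



lemma main1:
  fixes q \<nu> :: real and z :: complex
  assumes q: "0 < q" "q < 1" and nu: "\<nu> \<notin> \<int>" and z: "z \<noteq> 0"
  shows "2 / ((1 + complex_of_real q) * z) * qderiv q (\<lambda>w. w powr complex_of_real \<nu> * K3_formula q \<nu> w) z
     = - complex_of_real (q powr (- (\<nu> - 1) / 2)) * z powr complex_of_real (\<nu> - 1)
         * K3_formula q (\<nu> - 1) (complex_of_real (q powr (1/2)) * z)"
proof -
  define u where "u = z / 2"
  have u: "u \<noteq> 0" using z by (simp add: u_def)
  have zu: "z = 2 * u" by (simp add: u_def)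
  define sq where "sq = q powr (1/2)"
  have sq: "0 < sq" using q by (simp add: sq_def)
  have qz: "complex_of_real q * z \<noteq> 0" using q z by simp
  have sz: "complex_of_real sq * z \<noteq> 0" using sq z by simp
  have qz2: "complex_of_real q * z / 2 = complex_of_real q * u" by (simp add: u_def)
  have sz2: "complex_of_real sq * z / 2 = complex_of_real sq * u" by (simp add: u_def)
  define tt where "tt = (\<lambda>\<mu> w k. complex_of_real (cf q \<mu> k) * (w / 2) powr complex_of_real (\<mu> + 2 * real k))"
  have S: "tt \<mu> w sums I3 q \<mu> w" if "w \<noteq> 0" for \<mu> w
    unfolding tt_def by (rule I3_sums[OF q that])
  define zn where "zn = z powr complex_of_real \<nu>"
  define qzn where "qzn = (complex_of_real q * z) powr complex_of_real \<nu>"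
  define zm where "zm = z powr complex_of_real (\<nu> - 1)"
  have qzn: "qzn = complex_of_real (q powr \<nu>) * zn"
    unfolding qzn_def zn_def by (rule cpow_rmult[OF q(1) z])
  have zn: "zn = complex_of_real (2 powr \<nu>) * u powr complex_of_real \<nu>"
    unfolding zn_def u_def by (rule zpow[OF z])
  have zm: "zm = complex_of_real (2 powr (\<nu> - 1)) * u powr complex_of_real (\<nu> - 1)"
    unfolding zm_def u_def by (rule zpow[OF z])
  have tq: "tt \<mu> (complex_of_real q * z) k = complex_of_real (q powr (\<mu> + 2 * real k)) * tt \<mu> z k" for \<mu> k
    unfolding tt_def qz2 cpow_rmult[OF q(1) u] u_def[symmetric] by (simp add: mult_ac)
  have ts: "tt \<mu> (complex_of_real sq * z) k = complex_of_real (sq powr (\<mu> + 2 * real k)) * tt \<mu> z k" for \<mu> k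
    unfolding tt_def sz2 cpow_rmult[OF sq u] u_def[symmetric] by (simp add: mult_ac)

  define a where "a = (\<lambda>j. complex_of_real (2 powr (\<nu> - 1) * q powr (real j + 1 - \<nu>) * cf q (1 - \<nu>) j) * u ^ (2 * j))"
  have zA: "zn * tt (- \<nu>) z k = complex_of_real (cf q (- \<nu>) k * 2 powr \<nu>) * u ^ (2 * k)" for k
  proof -
    have "zn * tt (- \<nu>) z k = complex_of_real (cf q (- \<nu>) k * 2 powr \<nu>)
          * (u powr complex_of_real \<nu> * u powr complex_of_real (- \<nu> + 2 * real k))"
      unfolding zn tt_def u_def[symmetric] by (simp add: mult_ac)
    also have "u powr complex_of_real \<nu> * u powr complex_of_real (- \<nu> + 2 * real k) = u ^ (2 * k)"
      unfolding upow_add using upow_nat2[OF u, of k] by simp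
    finally show ?thesis .
  qed
  have qA: "qzn * tt (- \<nu>) (complex_of_real q * z) k = complex_of_real (q ^ (2 * k)) * (zn * tt (- \<nu>) z k)" for k
  proof -
    have "q powr \<nu> * q powr (- \<nu> + 2 * real k) = q ^ (2 * k)"
      using q by (simp add: powr_add[symmetric] powr_realpow[symmetric])
    thus ?thesis unfolding qzn tq by (simp add: mult_ac flip: of_real_mult)
  qed
  define LA where "LA = 2 / ((1 + complex_of_real q) * z) * ((zn * I3 q (- \<nu>) z - qzn * I3 q (- \<nu>) (complex_of_real q * z)) / ((1 - complex_of_real q) * z))"
  have "(\<lambda>k. 2 / ((1 + complex_of_real q) * z) * ((zn * tt (- \<nu>) z k - qzn * tt (- \<nu>) (complex_of_real q * z) k) / ((1 - complex_of_real q) * z))) sums LA"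
    unfolding LA_def by (intro sums_mult sums_divide sums_diff S z qz)
  moreover have "2 / ((1 + complex_of_real q) * z) * ((zn * tt (- \<nu>) z k - qzn * tt (- \<nu>) (complex_of_real q * z) k) / ((1 - complex_of_real q) * z))
      = complex_of_real (cf q (- \<nu>) k * 2 powr \<nu> * (1 - q ^ (2 * k)) / (2 * (1 - q\<^sup>2))) * (u ^ (2 * k) / u\<^sup>2)" for k
    unfolding qA unfolding zA unfolding zu by (rule Gstep[OF u q])
  ultimately have "(\<lambda>k. complex_of_real (cf q (- \<nu>) k * 2 powr \<nu> * (1 - q ^ (2 * k)) / (2 * (1 - q\<^sup>2))) * (u ^ (2 * k) / u\<^sup>2)) sums LA"
    by simp
  hence "(\<lambda>j. complex_of_real (cf q (- \<nu>) (Suc j) * 2 powr \<nu> * (1 - q ^ (2 * Suc j)) / (2 * (1 - q\<^sup>2))) * (u ^ (2 * Suc j) / u\<^sup>2)) sums LA"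
    by (subst sums_Suc_iff) simp
  moreover have "complex_of_real (cf q (- \<nu>) (Suc j) * 2 powr \<nu> * (1 - q ^ (2 * Suc j)) / (2 * (1 - q\<^sup>2))) * (u ^ (2 * Suc j) / u\<^sup>2) = a j" for j
  proof -
    have "cf q (- \<nu>) (Suc j) * 2 powr \<nu> * (1 - q ^ (2 * Suc j)) / (2 * (1 - q\<^sup>2))
        = 2 powr \<nu> / 2 * (cf q (- \<nu>) (Suc j) * (1 - q ^ (2 * Suc j)) / (1 - q\<^sup>2))" by simp
    also have "\<dots> = 2 powr (\<nu> - 1) * q powr (real j + 1 - \<nu>) * cf q (1 - \<nu>) j"
      unfolding cfA[OF q] by (simp add: powr_diff)
    finally have r: "cf q (- \<nu>) (Suc j) * 2 powr \<nu> * (1 - q ^ (2 * Suc j)) / (2 * (1 - q\<^sup>2))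
        = 2 powr (\<nu> - 1) * q powr (real j + 1 - \<nu>) * cf q (1 - \<nu>) j" .
    have "u ^ (2 * Suc j) / u\<^sup>2 = u ^ (2 * j)" using u by (simp add: power2_eq_square)
    thus ?thesis unfolding a_def r by simp
  qed
  ultimately have SA1: "a sums LA" by simp
  have "(\<lambda>j. complex_of_real (q powr ((1 - \<nu>) / 2)) * (zm * tt (1 - \<nu>) (complex_of_real sq * z) j))
      sums (complex_of_real (q powr ((1 - \<nu>) / 2)) * (zm * I3 q (1 - \<nu>) (complex_of_real sq * z)))"
    by (intro sums_mult S sz)
  moreover have "complex_of_real (q powr ((1 - \<nu>) / 2)) * (zm * tt (1 - \<nu>) (complex_of_real sq * z) j) = a j" for j
  proof -
    have zB1: "zm * tt (1 - \<nu>) z j = complex_of_real (cf q (1 - \<nu>) j * 2 powr (\<nu> - 1)) * u ^ (2 * j)"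
    proof -
      have "zm * tt (1 - \<nu>) z j = complex_of_real (cf q (1 - \<nu>) j * 2 powr (\<nu> - 1))
            * (u powr complex_of_real (\<nu> - 1) * u powr complex_of_real (1 - \<nu> + 2 * real j))"
        unfolding zm tt_def u_def[symmetric] by (simp add: mult_ac)
      also have "u powr complex_of_real (\<nu> - 1) * u powr complex_of_real (1 - \<nu> + 2 * real j) = u ^ (2 * j)"
        unfolding upow_add using upow_nat2[OF u, of j] by simp
      finally show ?thesis .
    qed
    have e: "(1 - \<nu>) / 2 + 1 / 2 * (1 - \<nu> + 2 * real j) = real j + 1 - \<nu>" by (simp add: field_simps)
    have pq: "q powr ((1 - \<nu>) / 2) * sq powr (1 - \<nu> + 2 * real j) = q powr (real j + 1 - \<nu>)"
      unfolding sq_def powr_powr by (simp only: powr_add[symmetric] e)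
    have "complex_of_real (q powr ((1 - \<nu>) / 2)) * (zm * tt (1 - \<nu>) (complex_of_real sq * z) j)
        = complex_of_real (q powr ((1 - \<nu>) / 2) * sq powr (1 - \<nu> + 2 * real j)) * (zm * tt (1 - \<nu>) z j)"
      unfolding ts by (simp add: mult_ac)
    also have "\<dots> = a j" unfolding pq zB1 a_def by (simp add: mult_ac)
    finally show ?thesis .
  qed
  ultimately have SA2: "a sums (complex_of_real (q powr ((1 - \<nu>) / 2)) * (zm * I3 q (1 - \<nu>) (complex_of_real sq * z)))"
    by simp
  have LA: "LA = complex_of_real (q powr ((1 - \<nu>) / 2)) * (zm * I3 q (1 - \<nu>) (complex_of_real sq * z))"
    using SA1 SA2 by (rule sums_unique2)

  define b where "b = (\<lambda>k. complex_of_real (2 powr (\<nu> - 1) * q ^ k * cf q (\<nu> - 1) k) * u powr complex_of_real (2 * \<nu> - 2 + 2 * real k))"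
  have zB: "zn * tt \<nu> z k = complex_of_real (cf q \<nu> k * 2 powr \<nu>) * u powr complex_of_real (2 * \<nu> + 2 * real k)" for k
  proof -
    have "zn * tt \<nu> z k = complex_of_real (cf q \<nu> k * 2 powr \<nu>)
          * (u powr complex_of_real \<nu> * u powr complex_of_real (\<nu> + 2 * real k))"
      unfolding zn tt_def u_def[symmetric] by (simp add: mult_ac)
    also have "\<nu> + (\<nu> + 2 * real k) = 2 * \<nu> + 2 * real k" by simp
    hence "u powr complex_of_real \<nu> * u powr complex_of_real (\<nu> + 2 * real k) = u powr complex_of_real (2 * \<nu> + 2 * real k)"
      unfolding upow_add by simp
    finally show ?thesis .
  qed
  have qB: "qzn * tt \<nu> (complex_of_real q * z) k = complex_of_real (q powr (2 * \<nu> + 2 * real k)) * (zn * tt \<nu> z k)" for k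
  proof -
    have "q powr \<nu> * q powr (\<nu> + 2 * real k) = q powr (2 * \<nu> + 2 * real k)"
      by (simp add: powr_add[symmetric])
    thus ?thesis unfolding qzn tq by (simp add: mult_ac flip: of_real_mult)
  qed
  define LB where "LB = 2 / ((1 + complex_of_real q) * z) * ((zn * I3 q \<nu> z - qzn * I3 q \<nu> (complex_of_real q * z)) / ((1 - complex_of_real q) * z))"
  have "(\<lambda>k. 2 / ((1 + complex_of_real q) * z) * ((zn * tt \<nu> z k - qzn * tt \<nu> (complex_of_real q * z) k) / ((1 - complex_of_real q) * z))) sums LB"
    unfolding LB_def by (intro sums_mult sums_divide sums_diff S z qz)
  moreover have "2 / ((1 + complex_of_real q) * z) * ((zn * tt \<nu> z k - qzn * tt \<nu> (complex_of_real q * z) k) / ((1 - complex_of_real q) * z))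
      = b k" for k
  proof -
    have "2 / ((1 + complex_of_real q) * z) * ((zn * tt \<nu> z k - qzn * tt \<nu> (complex_of_real q * z) k) / ((1 - complex_of_real q) * z))
      = complex_of_real (cf q \<nu> k * 2 powr \<nu> * (1 - q powr (2 * \<nu> + 2 * real k)) / (2 * (1 - q\<^sup>2)))
        * (u powr complex_of_real (2 * \<nu> + 2 * real k) / u\<^sup>2)"
      unfolding qB unfolding zB unfolding zu by (rule Gstep[OF u q])
    also have "cf q \<nu> k * 2 powr \<nu> * (1 - q powr (2 * \<nu> + 2 * real k)) / (2 * (1 - q\<^sup>2))
        = 2 powr (\<nu> - 1) * q ^ k * cf q (\<nu> - 1) k"
    proof -
      have "cf q \<nu> k * 2 powr \<nu> * (1 - q powr (2 * \<nu> + 2 * real k)) / (2 * (1 - q\<^sup>2))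
          = 2 powr \<nu> / 2 * (cf q \<nu> k * (1 - q powr (2 * \<nu> + 2 * real k)) / (1 - q\<^sup>2))" by simp
      also have "\<dots> = 2 powr (\<nu> - 1) * q ^ k * cf q (\<nu> - 1) k"
        unfolding cfB[OF q] by (simp add: powr_diff)
      finally show ?thesis .
    qed
    also have "u powr complex_of_real (2 * \<nu> + 2 * real k) / u\<^sup>2 = u powr complex_of_real (2 * \<nu> - 2 + 2 * real k)"
    proof -
      have e: "2 * \<nu> - 2 + 2 * real k + 2 * real (1::nat) = 2 * \<nu> + 2 * real k" by simp
      have c1: "u powr complex_of_real (2 * \<nu> - 2 + 2 * real k) * u powr complex_of_real (2 * real (1::nat))
          = u powr complex_of_real (2 * \<nu> + 2 * real k)"
        unfolding upow_add e ..
      have c2: "u powr complex_of_real (2 * real (1::nat)) = u\<^sup>2" using upow_nat2[OF u, of 1] by simp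
      have h: "u powr complex_of_real (2 * \<nu> + 2 * real k) = u powr complex_of_real (2 * \<nu> - 2 + 2 * real k) * u\<^sup>2"
        using c1 unfolding c2 by (rule sym)
      have u2: "u\<^sup>2 \<noteq> 0" using u by simp
      show ?thesis by (simp only: h nonzero_mult_div_cancel_right[OF u2])
    qed
    finally show ?thesis unfolding b_def .
  qed
  ultimately have SB1: "b sums LB" by simp
  have "(\<lambda>k. complex_of_real (q powr ((1 - \<nu>) / 2)) * (zm * tt (\<nu> - 1) (complex_of_real sq * z) k))
      sums (complex_of_real (q powr ((1 - \<nu>) / 2)) * (zm * I3 q (\<nu> - 1) (complex_of_real sq * z)))"
    by (intro sums_mult S sz)
  moreover have "complex_of_real (q powr ((1 - \<nu>) / 2)) * (zm * tt (\<nu> - 1) (complex_of_real sq * z) k) = b k" for k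
  proof -
    have zB1: "zm * tt (\<nu> - 1) z k = complex_of_real (cf q (\<nu> - 1) k * 2 powr (\<nu> - 1)) * u powr complex_of_real (2 * \<nu> - 2 + 2 * real k)"
    proof -
      have "zm * tt (\<nu> - 1) z k = complex_of_real (cf q (\<nu> - 1) k * 2 powr (\<nu> - 1))
            * (u powr complex_of_real (\<nu> - 1) * u powr complex_of_real (\<nu> - 1 + 2 * real k))"
        unfolding zm tt_def u_def[symmetric] by (simp add: mult_ac)
      also have ee: "\<nu> - 1 + (\<nu> - 1 + 2 * real k) = 2 * \<nu> - 2 + 2 * real k" by simp
      have "u powr complex_of_real (\<nu> - 1) * u powr complex_of_real (\<nu> - 1 + 2 * real k) = u powr complex_of_real (2 * \<nu> - 2 + 2 * real k)"
        unfolding upow_add ee ..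
      finally show ?thesis .
    qed
    have e: "(1 - \<nu>) / 2 + 1 / 2 * (\<nu> - 1 + 2 * real k) = real k" by (simp add: field_simps)
    have pq: "q powr ((1 - \<nu>) / 2) * sq powr (\<nu> - 1 + 2 * real k) = q ^ k"
      unfolding sq_def powr_powr by (simp only: powr_add[symmetric] e powr_realpow[OF q(1)])
    have "complex_of_real (q powr ((1 - \<nu>) / 2)) * (zm * tt (\<nu> - 1) (complex_of_real sq * z) k)
        = complex_of_real (q powr ((1 - \<nu>) / 2) * sq powr (\<nu> - 1 + 2 * real k)) * (zm * tt (\<nu> - 1) z k)"
      unfolding ts by (simp add: mult_ac)
    also have "\<dots> = b k" unfolding pq zB1 b_def by (simp add: mult_ac)
    finally show ?thesis .
  qed
  ultimately have SB2: "b sums (complex_of_real (q powr ((1 - \<nu>) / 2)) * (zm * I3 q (\<nu> - 1) (complex_of_real sq * z)))"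
    by simp
  have LB: "LB = complex_of_real (q powr ((1 - \<nu>) / 2)) * (zm * I3 q (\<nu> - 1) (complex_of_real sq * z))"
    using SB1 SB2 by (rule sums_unique2)

  define C where "C = complex_of_real (Cr q \<nu>)"
  have ring: "x * ((a1 * (c * (p - r)) - b1 * (c * (s - t))) / d) = c * (x * ((a1 * p - b1 * s) / d) - x * ((a1 * r - b1 * t) / d))"
    for x a1 b1 c p r s t d :: complex
    by (simp add: divide_inverse algebra_simps)
  have "2 / ((1 + complex_of_real q) * z) * qderiv q (\<lambda>w. w powr complex_of_real \<nu> * K3_formula q \<nu> w) z
      = C * (LA - LB)"
    unfolding qderiv_def K3f_Cr LA_def LB_def C_def zn_def[symmetric] qzn_def[symmetric] by (rule ring)
  also have "\<dots> = - complex_of_real (q powr ((1 - \<nu>) / 2)) * zm * (complex_of_real (- Cr q \<nu>)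
      * (I3 q (1 - \<nu>) (complex_of_real sq * z) - I3 q (\<nu> - 1) (complex_of_real sq * z)))"
    unfolding LA LB C_def by (simp add: algebra_simps)
  also have "\<dots> = - complex_of_real (q powr (- (\<nu> - 1) / 2)) * z powr complex_of_real (\<nu> - 1)
         * K3_formula q (\<nu> - 1) (complex_of_real (q powr (1/2)) * z)"
  proof -
    have "- (\<nu> - 1) / 2 = (1 - \<nu>) / 2" by simp
    moreover have "- (\<nu> - 1) = 1 - \<nu>" by simp
    ultimately show ?thesis unfolding K3f_Cr Cr_shift[OF q nu] zm_def sq_def by simp
  qed
  finally show ?thesis .
qed



lemma filterlim_cont_at:
  fixes f :: "'a::metric_space \<Rightarrow> 'b::metric_space"
  assumes "(f \<longlongrightarrow> f x) (at x)" "inj f"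
  shows "filterlim f (at (f x)) (at x)"
proof (rule filterlim_atI[OF assms(1)])
  have "eventually (\<lambda>y. y \<noteq> x) (at x)" by (simp add: eventually_at_filter)
  thus "eventually (\<lambda>y. f y \<noteq> f x) (at x)"
    by eventually_elim (use assms(2) in \<open>auto dest: injD\<close>)
qed

lemma Gc_deriv:
  assumes "0 < q" "q < 1" "w \<noteq> 0" and that: "I3 q (- c) w - I3 q c w = 0"
  shows "\<exists>D. ((\<lambda>\<mu>. (I3 q (- \<mu>) w - I3 q \<mu> w) / complex_of_real (\<mu> - c)) \<longlongrightarrow> D) (at c)"
proof -
  define G where "G = (\<lambda>s. Ic q w (- s) - Ic q w s)"
  have h1: "Ic q w holomorphic_on ball (complex_of_real c) 1" by (rule Ic_holo[OF assms(1-3)])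
  have h2: "Ic q w holomorphic_on ball (complex_of_real (- c)) 1" by (rule Ic_holo[OF assms(1-3)])
  have "(\<lambda>s. Ic q w (- s)) holomorphic_on ball (complex_of_real c) 1"
  proof -
    have "uminus ` ball (complex_of_real c) 1 \<subseteq> ball (complex_of_real (- c)) 1"
      by (auto simp: dist_norm norm_minus_commute)
    hence "Ic q w holomorphic_on uminus ` ball (complex_of_real c) 1" using h2 by (rule holomorphic_on_subset[rotated])
    moreover have hm: "(\<lambda>s::complex. - s) holomorphic_on ball (complex_of_real c) 1" by (intro holomorphic_intros)
    ultimately show ?thesis using holomorphic_on_compose[OF hm] by (simp add: o_def)
  qed
  hence "G holomorphic_on ball (complex_of_real c) 1" unfolding G_def using h1 by (intro holomorphic_intros)
  hence "G field_differentiable at (complex_of_real c)"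
    by (rule holomorphic_on_imp_differentiable_at) auto
  then obtain D where D: "(G has_field_derivative D) (at (complex_of_real c))"
    unfolding field_differentiable_def by blast
  hence L: "((\<lambda>s. (G s - G (complex_of_real c)) / (s - complex_of_real c)) \<longlongrightarrow> D) (at (complex_of_real c))"
    by (simp add: has_field_derivative_iff)
  have fo: "filterlim complex_of_real (at (complex_of_real c)) (at c)"
    by (rule filterlim_cont_at) (auto intro!: tendsto_intros inj_onI)
  have "((\<lambda>\<mu>. (G (complex_of_real \<mu>) - G (complex_of_real c)) / (complex_of_real \<mu> - complex_of_real c)) \<longlongrightarrow> D) (at c)"
    using filterlim_compose[OF L fo] by (simp add: o_def)
  moreover have "G (complex_of_real \<mu>) = I3 q (- \<mu>) w - I3 q \<mu> w" for \<mu>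
    unfolding G_def I3_Ic[OF assms(1,2)] by simp
  ultimately have "((\<lambda>\<mu>. (I3 q (- \<mu>) w - I3 q \<mu> w) / complex_of_real (\<mu> - c)) \<longlongrightarrow> D) (at c)"
    using that by simp
  thus ?thesis by blast
qed


lemma apowr_nonone:
  fixes a y :: real
  assumes "0 < a" "a < 1" "y \<noteq> 0"
  shows "a powr y \<noteq> 1"
  using assms by simp

lemma alg3: "(x::real) * (y / ((h * s) * e)) = x * (y / (s * e)) / h"
  by (simp add: divide_divide_eq_left mult_ac)

lemma eqK_alg:
  fixes F h dr :: real and G :: complex
  assumes "dr \<noteq> 0" "h \<noteq> 0"
  shows "complex_of_real (F / h) * G = complex_of_real F * (G / complex_of_real dr) * complex_of_real (dr / h)"
  using assms by (simp add: field_simps)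

lemma K3f_lim_nonpos:
  assumes q: "0 < q" "q < 1" and w: "w \<noteq> 0"
  shows "\<exists>L. ((\<lambda>\<mu>. K3_formula q \<mu> w) \<longlongrightarrow> L) (at (- real m))"
proof -
  define a where "a = q\<^sup>2"
  have a: "0 < a" "a < 1" using q by (auto simp: a_def power_less_one_iff)
  define c where "c = - real m"
  define P where "P = qpoch_inf a a"
  define S where "S = (\<lambda>\<mu>. (\<Prod>i<m. 1 - a powr \<mu> * a ^ i) * qpoch_inf (a powr \<mu> * a ^ Suc m) a)"
  define h where "h = (\<lambda>\<mu>. 1 - a powr (\<mu> + real m))"
  define E1 where "E1 = (\<lambda>\<mu>. qpoch_inf (a powr (1 - \<mu>)) a)"
  define F1 where "F1 = (\<lambda>\<mu>. 1/2 * q powr (- (\<mu>\<^sup>2) + \<mu>) * (P\<^sup>2 * (1 - a) / (S \<mu> * E1 \<mu>)))"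
  have Emu: "qpoch_inf (a powr \<mu>) a = h \<mu> * S \<mu>" for \<mu>
  proof -
    have e1: "qpoch_inf (a powr \<mu>) a = (\<Prod>i<Suc m. 1 - a powr \<mu> * a ^ i) * qpoch_inf (a powr \<mu> * a ^ Suc m) a"
      by (rule qpinf_split[OF a])
    have e2: "a powr \<mu> * a ^ m = a powr (\<mu> + real m)" using a by (simp add: powr_add powr_realpow)
    have e3: "(\<Prod>i<Suc m. 1 - a powr \<mu> * a ^ i) = (\<Prod>i<m. 1 - a powr \<mu> * a ^ i) * h \<mu>"
      unfolding h_def prod.lessThan_Suc e2 ..
    show ?thesis unfolding e1 e3 S_def by (simp only: mult_ac)
  qed
  have CrF: "Cr q \<mu> = F1 \<mu> / h \<mu>" for \<mu>
  proof -
    have "Cr q \<mu> = 1/2 * q powr (- (\<mu>\<^sup>2) + \<mu>) * (qGamma a \<mu> * qGamma a (1 - \<mu>))"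
      unfolding Cr_def a_def by (simp only: mult.assoc)
    also have "\<dots> = 1/2 * q powr (- (\<mu>\<^sup>2) + \<mu>) * (P\<^sup>2 * (1 - a) / ((h \<mu> * S \<mu>) * E1 \<mu>))"
      unfolding qGamma_refl_prod[OF a, of \<mu>] Emu[of \<mu>, symmetric] P_def E1_def ..
    also have "\<dots> = F1 \<mu> / h \<mu>" unfolding F1_def by (rule alg3)
    finally show ?thesis .
  qed
  have hnz: "h \<mu> \<noteq> 0" if "\<mu> \<noteq> c" for \<mu>
  proof -
    have "\<mu> + real m \<noteq> 0" using that unfolding c_def by simp
    thus ?thesis unfolding h_def using apowr_nonone[OF a] by simp
  qed
  have eqK: "K3_formula q \<mu> w = complex_of_real (F1 \<mu>) * ((I3 q (- \<mu>) w - I3 q \<mu> w) / complex_of_real (\<mu> - c))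
       * complex_of_real ((\<mu> - c) / h \<mu>)" if "\<mu> \<noteq> c" for \<mu>
  proof -
    have d: "complex_of_real (\<mu> - c) \<noteq> 0" using that by simp
    have hh: "complex_of_real (h \<mu>) \<noteq> 0" using hnz[OF that] by simp
    show ?thesis unfolding K3f_Cr CrF by (rule eqK_alg) (use that hnz[OF that] in auto)
  qed
  have Sc: "S c \<noteq> 0"
  proof -
    have "1 - a powr c * a ^ i \<noteq> 0" if "i < m" for i
    proof -
      have "a powr c * a ^ i = a powr (c + real i)" using a by (simp add: powr_add powr_realpow)
      moreover have "c + real i \<noteq> 0" using that unfolding c_def by simp
      ultimately show ?thesis using apowr_nonone[OF a] by simp
    qed
    hence "(\<Prod>i<m. 1 - a powr c * a ^ i) \<noteq> 0" by simp
    moreover have eqa: "a powr c * a ^ Suc m = a" unfolding c_def using a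
      by (simp add: powr_minus powr_realpow[symmetric] field_simps)
    moreover have "S c = (\<Prod>i<m. 1 - a powr c * a ^ i) * qpoch_inf a a"
      unfolding S_def by (simp only: eqa)
    ultimately show ?thesis using Pa_nonzero[OF a] by simp
  qed
  have E1c: "E1 c \<noteq> 0" unfolding E1_def
  proof (rule qpinf_nonzero[OF a])
    fix j
    have "a powr (1 - c) * a ^ j = a powr (1 - c + real j)" using a by (simp add: powr_add powr_realpow)
    moreover have "1 - c + real j \<noteq> 0" unfolding c_def by simp
    ultimately show "a powr (1 - c) * a ^ j \<noteq> 1" using apowr_nonone[OF a] by simp
  qed
  have cS: "isCont S c" unfolding S_def
    by (intro continuous_intros isCont_o2[OF _ qpinf_isCont[OF a]]) (use a in auto)
  have cE: "isCont E1 c" unfolding E1_def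
    by (intro continuous_intros isCont_o2[OF _ qpinf_isCont[OF a]]) (use a in auto)
  have cF: "isCont F1 c" unfolding F1_def
    using cS cE Sc E1c q by (intro continuous_intros) auto
  have L1: "((\<lambda>\<mu>. complex_of_real (F1 \<mu>)) \<longlongrightarrow> complex_of_real (F1 c)) (at c)"
    using cF by (intro tendsto_intros) (simp add: isCont_def)
  have I0: "I3 q (- c) w - I3 q c w = 0" unfolding c_def using I3_int_sym[OF q w, of m] by simp
  obtain D where L2: "((\<lambda>\<mu>. (I3 q (- \<mu>) w - I3 q \<mu> w) / complex_of_real (\<mu> - c)) \<longlongrightarrow> D) (at c)"
    using Gc_deriv[OF q w I0] by blast
  have der: "((\<lambda>\<mu>. exp ((\<mu> + real m) * ln a)) has_real_derivative exp ((c + real m) * ln a) * ln a) (at c)"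
    by (auto intro!: derivative_eq_intros)
  hence "((\<lambda>\<mu>. (exp ((\<mu> + real m) * ln a) - exp ((c + real m) * ln a)) / (\<mu> - c)) \<longlongrightarrow> ln a) (at c)"
    unfolding has_field_derivative_iff c_def by simp
  moreover have "(exp ((\<mu> + real m) * ln a) - exp ((c + real m) * ln a)) / (\<mu> - c) = - (h \<mu> / (\<mu> - c))" for \<mu>
    unfolding h_def c_def using a by (simp add: powr_def minus_divide_left algebra_simps)
  ultimately have "((\<lambda>\<mu>. - (h \<mu> / (\<mu> - c))) \<longlongrightarrow> ln a) (at c)" by simp
  hence "((\<lambda>\<mu>. inverse (- (h \<mu> / (\<mu> - c)))) \<longlongrightarrow> inverse (ln a)) (at c)"
    using a by (intro tendsto_inverse) auto
  hence "((\<lambda>\<mu>. - ((\<mu> - c) / h \<mu>)) \<longlongrightarrow> inverse (ln a)) (at c)" by (simp add: inverse_eq_divide)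
  hence "((\<lambda>\<mu>. - (- ((\<mu> - c) / h \<mu>))) \<longlongrightarrow> - inverse (ln a)) (at c)" by (intro tendsto_minus)
  hence "((\<lambda>\<mu>. (\<mu> - c) / h \<mu>) \<longlongrightarrow> - inverse (ln a)) (at c)" by simp
  hence L3: "((\<lambda>\<mu>. complex_of_real ((\<mu> - c) / h \<mu>)) \<longlongrightarrow> complex_of_real (- inverse (ln a))) (at c)"
    by (intro tendsto_intros)
  have "((\<lambda>\<mu>. complex_of_real (F1 \<mu>) * ((I3 q (- \<mu>) w - I3 q \<mu> w) / complex_of_real (\<mu> - c))
       * complex_of_real ((\<mu> - c) / h \<mu>)) \<longlongrightarrow> complex_of_real (F1 c) * D * complex_of_real (- inverse (ln a))) (at c)"
    by (intro tendsto_mult L1 L2 L3)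
  moreover have "eventually (\<lambda>\<mu>. \<mu> \<noteq> c) (at c)" by (simp add: eventually_at_filter)
  hence "eventually (\<lambda>\<mu>. complex_of_real (F1 \<mu>) * ((I3 q (- \<mu>) w - I3 q \<mu> w) / complex_of_real (\<mu> - c))
       * complex_of_real ((\<mu> - c) / h \<mu>) = K3_formula q \<mu> w) (at c)"
    by eventually_elim (simp add: eqK)
  ultimately have "((\<lambda>\<mu>. K3_formula q \<mu> w) \<longlongrightarrow> complex_of_real (F1 c) * D * complex_of_real (- inverse (ln a))) (at c)"
    by (rule Lim_transform_eventually)
  thus ?thesis unfolding c_def by blast
qed



lemma K3f_sym:
  assumes "0 < q" "q < 1" "\<mu> \<notin> \<int>"
  shows "K3_formula q (- \<mu>) w = K3_formula q \<mu> w"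
  unfolding K3f_Cr Cr_neg[OF assms] by (simp add: algebra_simps)

lemma near_int_nonint:
  assumes "n \<in> \<int>"
  shows "eventually (\<lambda>\<mu>::real. \<mu> \<notin> \<int>) (at n)"
  unfolding eventually_at
proof (intro exI[of _ 1] conjI allI impI ballI)
  fix x :: real assume x: "x \<noteq> n \<and> dist x n < 1"
  show "x \<notin> \<int>"
  proof
    assume "x \<in> \<int>"
    hence "x - n \<in> \<int>" using assms by (intro Ints_diff)
    moreover have "x - n \<noteq> 0" using x by simp
    ultimately have "1 \<le> \<bar>x - n\<bar>" by (rule Ints_nonzero_abs_ge1)
    thus False using x by (simp add: dist_real_def)
  qed
qed simp

lemma filterlim_uminus_at_real: "filterlim uminus (at (- x)) (at (x::real))"
  by (rule filterlim_cont_at) (auto intro!: tendsto_intros inj_onI)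

lemma filterlim_minus1_at_real: "filterlim (\<lambda>\<mu>. \<mu> - 1) (at (x - 1)) (at (x::real))"
  by (rule filterlim_cont_at[of "\<lambda>\<mu>. \<mu> - 1" x, simplified]) (auto intro!: tendsto_intros inj_onI)

lemma K3f_lim:
  assumes q: "0 < q" "q < 1" and w: "w \<noteq> 0" and n: "n \<in> \<int>"
  shows "\<exists>L. ((\<lambda>\<mu>. K3_formula q \<mu> w) \<longlongrightarrow> L) (at n)"
proof -
  obtain k where k: "n = of_int k" using n by (auto elim: Ints_cases)
  show ?thesis
  proof (cases "k \<le> 0")
    case True
    hence "n = - real (nat (- k))" using k by simp
    thus ?thesis using K3f_lim_nonpos[OF q w] by simp
  next
    case False
    hence nn: "- n = - real (nat k)" using k by simp
    obtain L where L: "((\<lambda>\<mu>. K3_formula q \<mu> w) \<longlongrightarrow> L) (at (- n))"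
      using K3f_lim_nonpos[OF q w, of "nat k"] nn by auto
    have "((\<lambda>\<mu>. K3_formula q (- \<mu>) w) \<longlongrightarrow> L) (at n)"
      using filterlim_compose[OF L filterlim_uminus_at_real[of n]] by simp
    moreover have "eventually (\<lambda>\<mu>. K3_formula q (- \<mu>) w = K3_formula q \<mu> w) (at n)"
      using near_int_nonint[OF n] by eventually_elim (rule K3f_sym[OF q])
    ultimately have "((\<lambda>\<mu>. K3_formula q \<mu> w) \<longlongrightarrow> L) (at n)"
      by (rule Lim_transform_eventually)
    thus ?thesis by blast
  qed
qed

lemma K3_tendsto:
  assumes q: "0 < q" "q < 1" and w: "w \<noteq> 0" and n: "n \<in> \<int>"
  shows "((\<lambda>\<mu>. K3_formula q \<mu> w) \<longlongrightarrow> K3 q n w) (at n)"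
proof -
  obtain L where L: "((\<lambda>\<mu>. K3_formula q \<mu> w) \<longlongrightarrow> L) (at n)" using K3f_lim[OF assms] by blast
  have "K3 q n w = Lim (at n) (\<lambda>\<mu>. K3_formula q \<mu> w)" unfolding K3_def using n by simp
  also have "\<dots> = L" by (rule tendsto_Lim[OF _ L]) simp
  finally show ?thesis using L by simp
qed

lemma K3_sym:
  assumes q: "0 < q" "q < 1" and w: "w \<noteq> 0"
  shows "K3 q (- \<nu>) w = K3 q \<nu> w"
proof (cases "\<nu> \<in> \<int>")
  case False
  hence "- \<nu> \<notin> \<int>" using nonint_shift(4) by blast
  thus ?thesis unfolding K3_def using False K3f_sym[OF q False] by simp
next
  case True
  hence mn: "- \<nu> \<in> \<int>" by simp
  have L1: "((\<lambda>\<mu>. K3_formula q \<mu> w) \<longlongrightarrow> K3 q (- \<nu>) w) (at (- \<nu>))" by (rule K3_tendsto[OF q w mn])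
  have L2: "((\<lambda>\<mu>. K3_formula q \<mu> w) \<longlongrightarrow> K3 q \<nu> w) (at \<nu>)" by (rule K3_tendsto[OF q w True])
  have "((\<lambda>\<mu>. K3_formula q (- \<mu>) w) \<longlongrightarrow> K3 q \<nu> w) (at (- \<nu>))"
    using filterlim_compose[OF L2 filterlim_uminus_at_real[of "- \<nu>", simplified]] by simp
  moreover have "eventually (\<lambda>\<mu>. K3_formula q (- \<mu>) w = K3_formula q \<mu> w) (at (- \<nu>))"
    using near_int_nonint[OF mn] by eventually_elim (rule K3f_sym[OF q])
  ultimately have "((\<lambda>\<mu>. K3_formula q \<mu> w) \<longlongrightarrow> K3 q \<nu> w) (at (- \<nu>))"
    by (rule Lim_transform_eventually)
  thus ?thesis using L1 by (intro tendsto_unique[OF _ L1]) auto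
qed


lemma ident1:
  fixes q \<nu> :: real and z :: complex
  assumes q: "0 < q" "q < 1" and z: "z \<noteq> 0"
  shows "2 / ((1 + complex_of_real q) * z) * qderiv q (\<lambda>w. w powr complex_of_real \<nu> * K3 q \<nu> w) z
     = - complex_of_real (q powr (- (\<nu> - 1) / 2)) * z powr complex_of_real (\<nu> - 1)
         * K3 q (\<nu> - 1) (complex_of_real (q powr (1/2)) * z)"
proof (cases "\<nu> \<in> \<int>")
  case False
  have f1: "\<nu> - 1 \<notin> \<int>" using nonint_shift(3)[OF False, of 1] by simp
  have e: "(\<lambda>w. w powr complex_of_real \<nu> * K3 q \<nu> w) = (\<lambda>w. w powr complex_of_real \<nu> * K3_formula q \<nu> w)"
    unfolding K3_def using False by simp
  show ?thesis unfolding e using main1[OF q False z] f1 unfolding K3_def by simp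
next
  case True
  define sz where "sz = complex_of_real (q powr (1/2)) * z"
  have qz: "complex_of_real q * z \<noteq> 0" using q z by simp
  have szn: "sz \<noteq> 0" using q z by (simp add: sz_def)
  have n1: "\<nu> - 1 \<in> \<int>" using True by simp
  have "1 - complex_of_real q \<noteq> 0" using q by (metis eq_iff_diff_eq_0 of_real_1 of_real_eq_iff less_irrefl)
  hence dn: "(1 - complex_of_real q) * z \<noteq> 0" using z by simp
  define LHSf where "LHSf = (\<lambda>\<mu>. 2 / ((1 + complex_of_real q) * z) * ((z powr complex_of_real \<mu> * K3_formula q \<mu> z
      - (complex_of_real q * z) powr complex_of_real \<mu> * K3_formula q \<mu> (complex_of_real q * z)) / ((1 - complex_of_real q) * z)))"
  define RHSf where "RHSf = (\<lambda>\<mu>. - complex_of_real (q powr (- (\<mu> - 1) / 2)) * z powr complex_of_real (\<mu> - 1)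
         * K3_formula q (\<mu> - 1) sz)"
  have pw: "w powr complex_of_real t = exp (complex_of_real t * Ln w)" if "w \<noteq> 0" for w :: complex and t
    using that by (simp add: powr_def)
  have "eventually (\<lambda>\<mu>. LHSf \<mu> = RHSf \<mu>) (at \<nu>)"
    using near_int_nonint[OF True]
  proof eventually_elim
    case (elim \<mu>)
    show ?case using main1[OF q elim z] unfolding LHSf_def RHSf_def qderiv_def sz_def .
  qed
  moreover have "(LHSf \<longlongrightarrow> 2 / ((1 + complex_of_real q) * z) * ((z powr complex_of_real \<nu> * K3 q \<nu> z
      - (complex_of_real q * z) powr complex_of_real \<nu> * K3 q \<nu> (complex_of_real q * z)) / ((1 - complex_of_real q) * z))) (at \<nu>)"
  proof -
    have c1: "((\<lambda>\<mu>. z powr complex_of_real \<mu>) \<longlongrightarrow> z powr complex_of_real \<nu>) (at \<nu>)"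
      unfolding pw[OF z] by (intro tendsto_intros)
    have c2: "((\<lambda>\<mu>. (complex_of_real q * z) powr complex_of_real \<mu>) \<longlongrightarrow> (complex_of_real q * z) powr complex_of_real \<nu>) (at \<nu>)"
      unfolding pw[OF qz] by (intro tendsto_intros)
    have T1: "((\<lambda>\<mu>. z powr complex_of_real \<mu> * K3_formula q \<mu> z) \<longlongrightarrow> z powr complex_of_real \<nu> * K3 q \<nu> z) (at \<nu>)"
      by (rule tendsto_mult[OF c1 K3_tendsto[OF q z True]])
    have T2: "((\<lambda>\<mu>. (complex_of_real q * z) powr complex_of_real \<mu> * K3_formula q \<mu> (complex_of_real q * z))
        \<longlongrightarrow> (complex_of_real q * z) powr complex_of_real \<nu> * K3 q \<nu> (complex_of_real q * z)) (at \<nu>)"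
      by (rule tendsto_mult[OF c2 K3_tendsto[OF q qz True]])
    show ?thesis unfolding LHSf_def
      by (rule tendsto_mult[OF tendsto_const tendsto_divide[OF tendsto_diff[OF T1 T2] tendsto_const dn]])
  qed
  ultimately have L1: "(RHSf \<longlongrightarrow> 2 / ((1 + complex_of_real q) * z) * ((z powr complex_of_real \<nu> * K3 q \<nu> z
      - (complex_of_real q * z) powr complex_of_real \<nu> * K3 q \<nu> (complex_of_real q * z)) / ((1 - complex_of_real q) * z))) (at \<nu>)"
    by (rule Lim_transform_eventually[rotated])
  have K1: "((\<lambda>\<mu>. K3_formula q (\<mu> - 1) sz) \<longlongrightarrow> K3 q (\<nu> - 1) sz) (at \<nu>)"
    using filterlim_compose[OF K3_tendsto[OF q szn n1] filterlim_minus1_at_real[of \<nu>]] by (simp add: o_def)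
  have L2: "(RHSf \<longlongrightarrow> - complex_of_real (q powr (- (\<nu> - 1) / 2)) * z powr complex_of_real (\<nu> - 1)
         * K3 q (\<nu> - 1) sz) (at \<nu>)"
  proof -
    have c1: "((\<lambda>\<mu>. z powr complex_of_real (\<mu> - 1)) \<longlongrightarrow> z powr complex_of_real (\<nu> - 1)) (at \<nu>)"
      unfolding pw[OF z] by (intro tendsto_intros)
    have c0: "((\<lambda>\<mu>. q powr (- (\<mu> - 1) / 2)) \<longlongrightarrow> q powr (- (\<nu> - 1) / 2)) (at \<nu>)"
      using q by (intro tendsto_intros) auto
    show ?thesis unfolding RHSf_def
      by (rule tendsto_mult[OF tendsto_mult[OF tendsto_minus[OF tendsto_of_real[OF c0]] c1] K1])
  qed
  have "2 / ((1 + complex_of_real q) * z) * ((z powr complex_of_real \<nu> * K3 q \<nu> z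
      - (complex_of_real q * z) powr complex_of_real \<nu> * K3 q \<nu> (complex_of_real q * z)) / ((1 - complex_of_real q) * z))
      = - complex_of_real (q powr (- (\<nu> - 1) / 2)) * z powr complex_of_real (\<nu> - 1) * K3 q (\<nu> - 1) sz"
    by (rule tendsto_unique[OF _ L1 L2]) simp
  thus ?thesis unfolding qderiv_def sz_def .
qed

theorem proposition3p1:
  fixes q \<nu> :: real and z :: complex
  assumes "0 < q" "q < 1"
    and "z \<notin> {complex_of_real x | x. x \<le> 0}"
  shows "(2 / ((1 + complex_of_real q) * z)
           * qderiv q (\<lambda>w. w powr complex_of_real \<nu> * K3 q \<nu> w) z
         = - complex_of_real (q powr (- (\<nu> - 1) / 2)) * z powr complex_of_real (\<nu> - 1)
           * K3 q (\<nu> - 1) (complex_of_real (q powr (1/2)) * z))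
       \<and> ( 2 / ((1 + complex_of_real q) * z)
           * qderiv q (\<lambda>w. w powr complex_of_real (- \<nu>) * K3 q \<nu> w) z
         = - complex_of_real (q powr ((\<nu> + 1) / 2)) * z powr complex_of_real (- \<nu> - 1)
           * K3 q (\<nu> + 1) (complex_of_real (q powr (1/2)) * z))"
proof
  have q: "0 < q" "q < 1" using assms by auto
  have z: "z \<noteq> 0" using assms(3) by force
  show "2 / ((1 + complex_of_real q) * z) * qderiv q (\<lambda>w. w powr complex_of_real \<nu> * K3 q \<nu> w) z
         = - complex_of_real (q powr (- (\<nu> - 1) / 2)) * z powr complex_of_real (\<nu> - 1)
           * K3 q (\<nu> - 1) (complex_of_real (q powr (1/2)) * z)"
    by (rule ident1[OF q z])
  have qz: "complex_of_real q * z \<noteq> 0" using q z by simp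
  have szn: "complex_of_real (q powr (1/2)) * z \<noteq> 0" using q z by simp
  have I: "2 / ((1 + complex_of_real q) * z) * qderiv q (\<lambda>w. w powr complex_of_real (- \<nu>) * K3 q (- \<nu>) w) z
         = - complex_of_real (q powr (- (- \<nu> - 1) / 2)) * z powr complex_of_real (- \<nu> - 1)
           * K3 q (- \<nu> - 1) (complex_of_real (q powr (1/2)) * z)"
    by (rule ident1[OF q z])
  have s1: "K3 q (- \<nu>) z = K3 q \<nu> z" by (rule K3_sym[OF q z])
  have s2: "K3 q (- \<nu>) (complex_of_real q * z) = K3 q \<nu> (complex_of_real q * z)" by (rule K3_sym[OF q qz])
  have s3: "K3 q (- \<nu> - 1) (complex_of_real (q powr (1/2)) * z) = K3 q (\<nu> + 1) (complex_of_real (q powr (1/2)) * z)"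
    using K3_sym[OF q szn, of "\<nu> + 1"] by simp
  have e: "- (- \<nu> - 1) / 2 = (\<nu> + 1) / 2" by simp
  show "2 / ((1 + complex_of_real q) * z) * qderiv q (\<lambda>w. w powr complex_of_real (- \<nu>) * K3 q \<nu> w) z
         = - complex_of_real (q powr ((\<nu> + 1) / 2)) * z powr complex_of_real (- \<nu> - 1)
           * K3 q (\<nu> + 1) (complex_of_real (q powr (1/2)) * z)"
    using I unfolding qderiv_def s1 s2 s3 e .
qed

end
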